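(* Let $\Sigma_1,\Sigma_2$ be finite alphabets and $m\subseteq\Sigma_1^*\times\Sigma_2^*$ a string transduction. Then $\mathrm{nd}(m)$ is an mso definable graph transduction if and only if $\mathrm{ed}(m)$ is an mso definable graph transduction and $(\varepsilon,z)\in m$ implies $z=\varepsilon$.
   Context: Graphs over node alphabet $\Sigma$ and edge alphabet $\Gamma$ are triples $(V,E,\mathrm{lab})$, $E\subseteq V\times\Gamma\times V$, $\mathrm{lab}:V\to\Sigma$; $*$ denotes "unlabelled". $\mathrm{MSO}(\Sigma,\Gamma)$ is monadic second-order logic with node and node-set variables and atomic formulas $\mathrm{lab}_\sigma(x)$, $\mathrm{edge}_\gamma(x,y)$, $x=y$, $x\in X$. An mso definable graph transduction is a partial function given by a closed domain formula $\varphi_{\mathrm{dom}}$, a finite copy set $C$, node formulas $\varphi^c_\sigma(x)$ and edge formulas $\varphi^{c_1,c_2}_\gamma(x,y)$ over the input logic; on an input $g\models\varphi_{\mathrm{dom}}$ the output has nodes $(u,c)$ for which exactly one $\sigma$ satisfies $g\models\varphi^c_\sigma(u)$ (labelled $\sigma$), and edges $((u,c_1),\gamma,(v,c_2))$ between such nodes iff $g\models\varphi^{c_1,c_2}_\gamma(u,v)$. For $w$ of length $k$: $\mathrm{nd}(w)$ has $k$ nodes labelled by the letters of $w$ with $k-1$ unlabelled successor edges ($\mathrm{nd}(\varepsilon)$ is empty); $\mathrm{ed}(w)$ has $k+1$ unlabelled nodes forming a path whose $k$ edges are labelled by the letters of $w$. For a transduction $m$, $\mathrm{nd}(m)=\{(\mathrm{nd}(w),\mathrm{nd}(z))\mid(w,z)\in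 m\}$ and $\mathrm{ed}(m)=\{(\mathrm{ed}(w),\mathrm{ed}(z))\mid(w,z)\in m\}$. *)

theory Defs
  imports Main
begin

text \<open>A graph with node set of type 'v, node labels of type 'l (the node alphabet)
  and edge labels of type 'e (the edge alphabet).  The label "unlabelled" is
  modelled by the one-element type unit.\<close>

record ('v, 'l, 'e) graph =
  nodes :: "'v set"
  edges :: "('v \<times> 'e \<times> 'v) set"
  lab   :: "'v \<Rightarrow> 'l"

definition wf_graph :: "('v, 'l, 'e) graph \<Rightarrow> bool" where
  "wf_graph g \<longleftrightarrow> finite (nodes g) \<and> edges g \<subseteq> nodes g \<times> UNIV \<times> nodes g"

definition graph_iso :: "('v, 'l, 'e) graph \<Rightarrow> ('w, 'l, 'e) graph \<Rightarrow> bool" where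
  "graph_iso g h \<longleftrightarrow> (\<exists>f. bij_betw f (nodes g) (nodes h)
      \<and> (\<forall>v\<in>nodes g. lab h (f v) = lab g v)
      \<and> (\<forall>u\<in>nodes g. \<forall>v\<in>nodes g. \<forall>e. (u, e, v) \<in> edges g \<longleftrightarrow> (f u, e, f v) \<in> edges h))"

text \<open>First-order (node) variables and second-order (node-set) variables are
  both indexed by natural numbers, in separate name spaces.\<close>

datatype ('l, 'e) mso =
    Lab 'l nat
  | Edg 'e nat nat
  | Eq nat nat
  | In nat nat
  | Neg "('l, 'e) mso"
  | Conj "('l, 'e) mso" "('l, 'e) mso"
  | Ex1 nat "('l, 'e) mso"
  | Ex2 nat "('l, 'e) mso"

fun fv1 :: "('l, 'e) mso \<Rightarrow> nat set" where
  "fv1 (Lab s x) = {x}"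
| "fv1 (Edg e x y) = {x, y}"
| "fv1 (Eq x y) = {x, y}"
| "fv1 (In x X) = {x}"
| "fv1 (Neg p) = fv1 p"
| "fv1 (Conj p q) = fv1 p \<union> fv1 q"
| "fv1 (Ex1 x p) = fv1 p - {x}"
| "fv1 (Ex2 X p) = fv1 p"

fun fv2 :: "('l, 'e) mso \<Rightarrow> nat set" where
  "fv2 (Lab s x) = {}"
| "fv2 (Edg e x y) = {}"
| "fv2 (Eq x y) = {}"
| "fv2 (In x X) = {X}"
| "fv2 (Neg p) = fv2 p"
| "fv2 (Conj p q) = fv2 p \<union> fv2 q"
| "fv2 (Ex1 x p) = fv2 p"
| "fv2 (Ex2 X p) = fv2 p - {X}"

fun sat :: "('v, 'l, 'e) graph \<Rightarrow> (nat \<Rightarrow> 'v) \<Rightarrow> (nat \<Rightarrow> 'v set) \<Rightarrow> ('l, 'e) mso \<Rightarrow> bool" where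
  "sat g I S (Lab s x) \<longleftrightarrow> lab g (I x) = s"
| "sat g I S (Edg e x y) \<longleftrightarrow> (I x, e, I y) \<in> edges g"
| "sat g I S (Eq x y) \<longleftrightarrow> I x = I y"
| "sat g I S (In x X) \<longleftrightarrow> I x \<in> S X"
| "sat g I S (Neg p) \<longleftrightarrow> \<not> sat g I S p"
| "sat g I S (Conj p q) \<longleftrightarrow> sat g I S p \<and> sat g I S q"
| "sat g I S (Ex1 x p) \<longleftrightarrow> (\<exists>v\<in>nodes g. sat g (I(x := v)) S p)"
| "sat g I S (Ex2 X p) \<longleftrightarrow> (\<exists>V. V \<subseteq> nodes g \<and> sat g I (S(X := V)) p)"

text \<open>Closed formulas; node formulas phi(x) with x = variable 0;
  edge formulas phi(x,y) with x = variable 0, y = variable 1.\<close>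

definition closed :: "('l, 'e) mso \<Rightarrow> bool" where
  "closed p \<longleftrightarrow> fv1 p = {} \<and> fv2 p = {}"

definition sat0 :: "('v, 'l, 'e) graph \<Rightarrow> ('l, 'e) mso \<Rightarrow> bool" where
  "sat0 g p \<longleftrightarrow> (\<exists>I. sat g I (\<lambda>_. {}) p)"

definition sat1 :: "('v, 'l, 'e) graph \<Rightarrow> ('l, 'e) mso \<Rightarrow> 'v \<Rightarrow> bool" where
  "sat1 g p u \<longleftrightarrow> sat g (\<lambda>_. u) (\<lambda>_. {}) p"

definition sat2 :: "('v, 'l, 'e) graph \<Rightarrow> ('l, 'e) mso \<Rightarrow> 'v \<Rightarrow> 'v \<Rightarrow> bool" where
  "sat2 g p u v \<longleftrightarrow> sat g (\<lambda>i. if i = 0 then u else v) (\<lambda>_. {}) p"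

record ('l1, 'e1, 'l2, 'e2) mso_trans =
  tdom   :: "('l1, 'e1) mso"
  copies :: "nat set"
  nform  :: "nat \<Rightarrow> 'l2 \<Rightarrow> ('l1, 'e1) mso"
  eform  :: "nat \<Rightarrow> nat \<Rightarrow> 'e2 \<Rightarrow> ('l1, 'e1) mso"

definition wf_trans :: "('l1, 'e1, 'l2, 'e2) mso_trans \<Rightarrow> bool" where
  "wf_trans T \<longleftrightarrow> closed (tdom T) \<and> finite (copies T)
     \<and> (\<forall>c s. fv1 (nform T c s) \<subseteq> {0} \<and> fv2 (nform T c s) = {})
     \<and> (\<forall>c1 c2 e. fv1 (eform T c1 c2 e) \<subseteq> {0, 1} \<and> fv2 (eform T c1 c2 e) = {})"

definition out_nodes :: "('l1, 'e1, 'l2, 'e2) mso_trans \<Rightarrow> ('v, 'l1, 'e1) graph \<Rightarrow> ('v \<times> nat) set" where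
  "out_nodes T g = {(u, c). u \<in> nodes g \<and> c \<in> copies T \<and> (\<exists>!s. sat1 g (nform T c s) u)}"

definition apply_trans :: "('l1, 'e1, 'l2, 'e2) mso_trans \<Rightarrow> ('v, 'l1, 'e1) graph \<Rightarrow> ('v \<times> nat, 'l2, 'e2) graph" where
  "apply_trans T g =
     \<lparr> nodes = out_nodes T g,
       edges = {((u, c1), e, (v, c2)). (u, c1) \<in> out_nodes T g \<and> (v, c2) \<in> out_nodes T g
                  \<and> sat2 g (eform T c1 c2 e) u v},
       lab = (\<lambda>(u, c). THE s. sat1 g (nform T c s) u) \<rparr>"

text \<open>A relation R between (concrete representatives of) graphs is an MSO definable
  graph transduction if some MSO transduction T realises it up to isomorphism:
  a (finite) input graph is in the domain of T iff it is isomorphic to the first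
  component of a pair in R, and then the output of T is isomorphic to every
  corresponding second component (so R is in particular functional up to
  isomorphism).  Input graphs are taken w.l.o.g. with nodes in nat.\<close>

definition mso_definable :: "(('v, 'l1, 'e1) graph \<times> ('w, 'l2, 'e2) graph) set \<Rightarrow> bool" where
  "mso_definable R \<longleftrightarrow> (\<exists>T :: ('l1, 'e1, 'l2, 'e2) mso_trans. wf_trans T \<and>
     (\<forall>g :: (nat, 'l1, 'e1) graph. wf_graph g \<longrightarrow>
        (sat0 g (tdom T) \<longleftrightarrow> (\<exists>(g0, h) \<in> R. graph_iso g g0))
      \<and> (\<forall>(g0, h) \<in> R. graph_iso g g0 \<longrightarrow> graph_iso (apply_trans T g) h)))"

definition nd :: "'a list \<Rightarrow> (nat, 'a, unit) graph" where
  "nd w = \<lparr> nodes = {0..<length w},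
            edges = {(i, (), Suc i) | i. Suc i < length w},
            lab = (\<lambda>i. w ! i) \<rparr>"

definition ed :: "'a list \<Rightarrow> (nat, unit, 'a) graph" where
  "ed w = \<lparr> nodes = {0..length w},
            edges = {(i, w ! i, Suc i) | i. i < length w},
            lab = (\<lambda>_. ()) \<rparr>"

definition nd_rel :: "('a list \<times> 'b list) set \<Rightarrow> ((nat, 'a, unit) graph \<times> (nat, 'b, unit) graph) set" where
  "nd_rel m = {(nd w, nd z) | w z. (w, z) \<in> m}"

definition ed_rel :: "('a list \<times> 'b list) set \<Rightarrow> ((nat, unit, 'a) graph \<times> (nat, unit, 'b) graph) set" where
  "ed_rel m = {(ed w, ed z) | w z. (w, z) \<in> m}"

end

theory Submission
  imports Defs
begin


definition FF :: "('l,'e) mso" where "FF = Ex1 0 (Neg (Eq 0 0))"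
definition TT :: "('l,'e) mso" where "TT = Neg FF"
definition Disj :: "('l,'e) mso \<Rightarrow> ('l,'e) mso \<Rightarrow> ('l,'e) mso" where
  "Disj p q = Neg (Conj (Neg p) (Neg q))"
definition Imp :: "('l,'e) mso \<Rightarrow> ('l,'e) mso \<Rightarrow> ('l,'e) mso" where
  "Imp p q = Neg (Conj p (Neg q))"
definition All1 :: "nat \<Rightarrow> ('l,'e) mso \<Rightarrow> ('l,'e) mso" where
  "All1 x p = Neg (Ex1 x (Neg p))"

fun Bor :: "('l,'e) mso list \<Rightarrow> ('l,'e) mso" where
  "Bor [] = FF" | "Bor (p # ps) = Disj p (Bor ps)"
fun Band :: "('l,'e) mso list \<Rightarrow> ('l,'e) mso" where
  "Band [] = TT" | "Band (p # ps) = Conj p (Band ps)"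

lemma sat_FF[simp]: "sat g I S FF = False" by (simp add: FF_def)
lemma sat_TT[simp]: "sat g I S TT = True" by (simp add: TT_def)
lemma sat_Disj[simp]: "sat g I S (Disj p q) = (sat g I S p \<or> sat g I S q)" by (simp add: Disj_def)
lemma sat_Imp[simp]: "sat g I S (Imp p q) = (sat g I S p \<longrightarrow> sat g I S q)" by (simp add: Imp_def)
lemma sat_All1[simp]: "sat g I S (All1 x p) = (\<forall>v\<in>nodes g. sat g (I(x:=v)) S p)" by (simp add: All1_def)
lemma sat_Bor[simp]: "sat g I S (Bor ps) = (\<exists>p\<in>set ps. sat g I S p)" by (induction ps) auto
lemma sat_Band[simp]: "sat g I S (Band ps) = (\<forall>p\<in>set ps. sat g I S p)" by (induction ps) auto

lemma fv_FF[simp]: "fv1 FF = {}" "fv2 FF = {}" by (auto simp: FF_def)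
lemma fv_TT[simp]: "fv1 TT = {}" "fv2 TT = {}" by (auto simp: TT_def)
lemma fv_Disj[simp]: "fv1 (Disj p q) = fv1 p \<union> fv1 q" "fv2 (Disj p q) = fv2 p \<union> fv2 q" by (auto simp: Disj_def)
lemma fv_Imp[simp]: "fv1 (Imp p q) = fv1 p \<union> fv1 q" "fv2 (Imp p q) = fv2 p \<union> fv2 q" by (auto simp: Imp_def)
lemma fv_All1[simp]: "fv1 (All1 x p) = fv1 p - {x}" "fv2 (All1 x p) = fv2 p" by (auto simp: All1_def)
lemma fv_Bor[simp]: "fv1 (Bor ps) = (\<Union>p\<in>set ps. fv1 p)" "fv2 (Bor ps) = (\<Union>p\<in>set ps. fv2 p)" by (induction ps) auto
lemma fv_Band[simp]: "fv1 (Band ps) = (\<Union>p\<in>set ps. fv1 p)" "fv2 (Band ps) = (\<Union>p\<in>set ps. fv2 p)" by (induction ps) auto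

definition univ_list :: "'a::finite list" where "univ_list = (SOME xs. set xs = UNIV)"
lemma set_univ_list[simp]: "set (univ_list :: 'a::finite list) = UNIV"
  unfolding univ_list_def by (rule someI_ex) (rule finite_list, simp)

lemma sat_cong:
  "(\<forall>x\<in>fv1 p. I x = I' x) \<Longrightarrow> (\<forall>X\<in>fv2 p. S X = S' X) \<Longrightarrow> sat g I S p = sat g I' S' p"
proof (induction p arbitrary: I I' S S')
  case (Ex1 x p)
  have "\<And>v. sat g (I(x:=v)) S p = sat g (I'(x:=v)) S' p"
    by (rule Ex1.IH) (use Ex1.prems in auto)
  then show ?case by simp
next
  case (Ex2 X p)
  have "\<And>V. sat g I (S(X:=V)) p = sat g I' (S'(X:=V)) p"
    by (rule Ex2.IH) (use Ex2.prems in auto)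
  then show ?case by simp
next
  case (Conj p q)
  have "sat g I S p = sat g I' S' p" by (rule Conj.IH(1)) (use Conj.prems in auto)
  moreover have "sat g I S q = sat g I' S' q" by (rule Conj.IH(2)) (use Conj.prems in auto)
  ultimately show ?case by simp
qed auto

lemma sat_fv0:
  assumes "fv1 p \<subseteq> {0}" "fv2 p = {}"
  shows "sat g I S p = sat1 g p (I 0)"
  unfolding sat1_def by (rule sat_cong) (use assms in auto)

lemma sat_fv01:
  assumes "fv1 p \<subseteq> {0,1}" "fv2 p = {}"
  shows "sat g I S p = sat2 g p (I 0) (I 1)"
  unfolding sat2_def by (rule sat_cong) (use assms in auto)

lemma sat0_closed:
  assumes "closed p"
  shows "sat0 g p = sat g I (\<lambda>_. {}) p"
  unfolding sat0_def using assms sat_cong[of p _ I "\<lambda>_. {}" "\<lambda>_. {}" g]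
  by (auto simp: closed_def)

definition EO :: "'s list \<Rightarrow> ('s \<Rightarrow> ('l,'e) mso) \<Rightarrow> ('l,'e) mso" where
  "EO xs f = Bor (map (\<lambda>s. Conj (f s) (Band (map (\<lambda>s'. Neg (f s')) (filter (\<lambda>s'. s' \<noteq> s) xs)))) xs)"

lemma sat_EO: "set xs = UNIV \<Longrightarrow> sat g I S (EO xs f) = (\<exists>!s. sat g I S (f s))"
  unfolding EO_def by auto metis

lemma fv_EO: "fv1 (EO xs f) \<subseteq> (\<Union>s. fv1 (f s))" "fv2 (EO xs f) \<subseteq> (\<Union>s. fv2 (f s))"
  unfolding EO_def by auto


definition hasout :: "('v,'l,'e) graph \<Rightarrow> 'v \<Rightarrow> bool" where
  "hasout g u \<longleftrightarrow> (\<exists>e v. (u,e,v) \<in> edges g)"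

definition uniq_out :: "('v,'l,'e) graph \<Rightarrow> bool" where
  "uniq_out g \<longleftrightarrow> (\<forall>u e v e' v'. (u,e,v) \<in> edges g \<longrightarrow> (u,e',v') \<in> edges g \<longrightarrow> e = e' \<and> v = v')"

definition HO :: "nat \<Rightarrow> ('l, 'a::finite) mso" where
  "HO x = Ex1 (Suc x) (Bor (map (\<lambda>e. Edg e x (Suc x)) univ_list))"

lemma fv_HO[simp]: "fv1 (HO x) = {x}" "fv2 (HO x) = {}"
  by (auto simp: HO_def)

lemma wf_edgeD: "wf_graph g \<Longrightarrow> (u,e,v) \<in> edges g \<Longrightarrow> u \<in> nodes g \<and> v \<in> nodes g"
  unfolding wf_graph_def by auto

lemma sat_HO: "wf_graph g \<Longrightarrow> sat g I S (HO x) = hasout g (I x)"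
  unfolding HO_def hasout_def by (auto dest: wf_edgeD)

definition ndof :: "(nat, unit, 'a) graph \<Rightarrow> (nat, 'a, unit) graph" where
  "ndof g = \<lparr> nodes = {u \<in> nodes g. hasout g u},
     edges = {(u, (), v) | u v. hasout g u \<and> hasout g v \<and> (\<exists>e. (u,e,v) \<in> edges g)},
     lab = (\<lambda>u. THE e. \<exists>v. (u,e,v) \<in> edges g) \<rparr>"

fun rel :: "('a::finite, unit) mso \<Rightarrow> (unit, 'a) mso" where
  "rel (Lab s x) = Ex1 (Suc x) (Edg s x (Suc x))"
| "rel (Edg e x y) = Conj (Bor (map (\<lambda>e. Edg e x y) univ_list)) (HO y)"
| "rel (Eq x y) = Eq x y"
| "rel (In x X) = In x X"
| "rel (Neg p) = Neg (rel p)"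
| "rel (Conj p q) = Conj (rel p) (rel q)"
| "rel (Ex1 x p) = Ex1 x (Conj (HO x) (rel p))"
| "rel (Ex2 X p) = Ex2 X (Conj (Neg (Ex1 0 (Conj (In 0 X) (Neg (HO 0))))) (rel p))"

lemma fv_rel: "fv1 (rel p) \<subseteq> fv1 p" "fv2 (rel p) \<subseteq> fv2 p"
  by (induction p) auto

lemma ndof_lab:
  assumes "uniq_out g" "(u,e,v) \<in> edges g"
  shows "lab (ndof g) u = e"
  unfolding ndof_def using assms unfolding uniq_out_def by (auto intro!: the_equality)

lemma rel_sat:
  assumes wf: "wf_graph g" and uq: "uniq_out g"
  shows "(\<forall>x\<in>fv1 p. I x \<in> nodes (ndof g)) \<Longrightarrow> (\<forall>X\<in>fv2 p. S X \<subseteq> nodes (ndof g))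
    \<Longrightarrow> sat g I S (rel p) = sat (ndof g) I S p"
proof (induction p arbitrary: I S)
  case (Lab s x)
  then obtain e v where ev: "(I x, e, v) \<in> edges g" by (auto simp: ndof_def hasout_def)
  then have l: "lab (ndof g) (I x) = e" using ndof_lab[OF uq] by blast
  show ?case
  proof
    assume "sat g I S (rel (Lab s x))"
    then obtain v' where "(I x, s, v') \<in> edges g" by auto
    then show "sat (ndof g) I S (Lab s x)" using l ev uq unfolding uniq_out_def by auto
  next
    assume "sat (ndof g) I S (Lab s x)"
    then show "sat g I S (rel (Lab s x))" using l ev wf_edgeD[OF wf ev] by auto
  qed
next
  case (Edg e x y)
  then have "I x \<in> nodes g" "I y \<in> nodes g" "hasout g (I x)" "hasout g (I y)"
    by (auto simp: ndof_def)
  then show ?case by (simp add: sat_HO[OF wf] ndof_def)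
next
  case (Ex1 x p)
  have nd: "nodes (ndof g) = {u \<in> nodes g. hasout g u}" by (simp add: ndof_def)
  have IH: "sat g (I(x:=v)) S (rel p) = sat (ndof g) (I(x:=v)) S p" if v: "v \<in> nodes (ndof g)" for v
  proof (rule Ex1.IH)
    show "\<forall>y\<in>fv1 p. (I(x:=v)) y \<in> nodes (ndof g)" using Ex1.prems(1) v by auto
    show "\<forall>X\<in>fv2 p. S X \<subseteq> nodes (ndof g)" using Ex1.prems(2) by simp
  qed
  have "sat g I S (rel (Ex1 x p)) = (\<exists>v\<in>nodes g. hasout g v \<and> sat g (I(x:=v)) S (rel p))"
    by (simp add: sat_HO[OF wf])
  also have "\<dots> = (\<exists>v\<in>nodes (ndof g). sat (ndof g) (I(x:=v)) S p)"
    using IH nd by auto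
  finally show ?case by simp
next
  case (Ex2 X p)
  have nd: "nodes (ndof g) = {u \<in> nodes g. hasout g u}" by (simp add: ndof_def)
  have IH: "sat g I (S(X:=V)) (rel p) = sat (ndof g) I (S(X:=V)) p" if V: "V \<subseteq> nodes (ndof g)" for V
  proof (rule Ex2.IH)
    show "\<forall>y\<in>fv1 p. I y \<in> nodes (ndof g)" using Ex2.prems(1) by simp
    show "\<forall>Y\<in>fv2 p. (S(X:=V)) Y \<subseteq> nodes (ndof g)" using Ex2.prems(2) V by auto
  qed
  have "sat g I S (rel (Ex2 X p)) = (\<exists>V. V \<subseteq> nodes g \<and> (\<forall>v\<in>nodes g. v \<in> V \<longrightarrow> hasout g v) \<and> sat g I (S(X:=V)) (rel p))"
    by (simp add: sat_HO[OF wf])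
  also have "\<dots> = (\<exists>V. V \<subseteq> nodes (ndof g) \<and> sat g I (S(X:=V)) (rel p))"
  proof -
    have "(V \<subseteq> nodes g \<and> (\<forall>v\<in>nodes g. v \<in> V \<longrightarrow> hasout g v)) = (V \<subseteq> nodes (ndof g))" for V
      unfolding nd by auto
    then show ?thesis by (metis (no_types, lifting))
  qed
  also have "\<dots> = (\<exists>V. V \<subseteq> nodes (ndof g) \<and> sat (ndof g) I (S(X:=V)) p)"
    using IH by (meson)
  finally show ?case by simp
next
  case (Conj p q)
  have "sat g I S (rel p) = sat (ndof g) I S p" by (rule Conj.IH(1)) (use Conj.prems in auto)
  moreover have "sat g I S (rel q) = sat (ndof g) I S q" by (rule Conj.IH(2)) (use Conj.prems in auto)
  ultimately show ?case by simp
qed (simp_all add: ndof_def)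

definition ShapeF :: "(unit, 'a::finite) mso" where
  "ShapeF = Conj (Ex1 0 (Conj (Neg (HO 0)) (All1 1 (Imp (Neg (HO 1)) (Eq 1 0)))))
     (All1 0 (All1 1 (All1 2 (Band (concat (map (\<lambda>e. map (\<lambda>e'.
        Imp (Conj (Edg e 0 1) (Edg e' 0 2)) (if e = e' then Eq 1 2 else FF)) univ_list) univ_list))))))"

lemma closed_ShapeF: "closed ShapeF"
proof -
  have a: "fv1 (Imp (Conj (Edg e 0 1) (Edg e' 0 2)) (if e = e' then Eq 1 2 else FF)) \<subseteq> {0,1,2}"
   "fv2 (Imp (Conj (Edg e 0 1) (Edg e' 0 2)) (if e = e' then Eq 1 2 else (FF::(unit,'a) mso))) = {}" for e e' :: 'a
    by auto
  have b: "fv1 (Imp (Neg (HO 1)) (Eq 1 0) :: (unit,'a) mso) \<subseteq> {0,1}" "fv2 (Imp (Neg (HO 1)) (Eq 1 0) :: (unit,'a) mso) = {}"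
    by auto
  show ?thesis unfolding closed_def ShapeF_def using a b by (simp only: fv1.simps fv2.simps fv_All1 fv_Band set_concat set_map fv_HO set_univ_list) (auto dest!: subsetD[OF a(1)] subsetD[OF b(1)] simp: a(2) b(2) simp del: fv_Imp)
qed

definition shape_ok :: "('v,'l,'e) graph \<Rightarrow> bool" where
  "shape_ok g \<longleftrightarrow> (\<exists>!t. t \<in> nodes g \<and> \<not> hasout g t) \<and> uniq_out g"

lemma sat_ShapeF:
  assumes wf: "wf_graph g"
  shows "sat g I S ShapeF = shape_ok (g :: ('v, unit, 'a::finite) graph)"
proof -
  have A: "sat g I S (Ex1 0 (Conj (Neg (HO 0)) (All1 1 (Imp (Neg (HO 1)) (Eq 1 0)))))
      = (\<exists>!t. t \<in> nodes g \<and> \<not> hasout g t)"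
    by (auto simp: sat_HO[OF wf])
  have B: "sat g I S (All1 0 (All1 1 (All1 2 (Band (concat (map (\<lambda>e. map (\<lambda>e'.
        Imp (Conj (Edg e 0 1) (Edg e' 0 2)) (if e = e' then Eq 1 2 else FF)) univ_list) univ_list))))))
      = uniq_out g"
    unfolding uniq_out_def
  proof (simp only: sat_All1 sat_Band set_concat set_map, intro iffI allI impI)
    fix u e v e' v'
    assume H: "\<forall>x\<in>nodes g. \<forall>y\<in>nodes g. \<forall>z\<in>nodes g. \<forall>p\<in>\<Union> (set ` (\<lambda>e. map (\<lambda>e'.
        Imp (Conj (Edg e 0 1) (Edg e' 0 2)) (if e = e' then Eq 1 2 else FF)) univ_list) ` set univ_list).
        sat g (I(0 := x, 1 := y, 2 := z)) S p"
      and e1: "(u,e,v) \<in> edges g" and e2: "(u,e',v') \<in> edges g"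
    have "sat g (I(0 := u, 1 := v, 2 := v')) S (Imp (Conj (Edg e 0 1) (Edg e' 0 2)) (if e = e' then Eq 1 2 else FF))"
      using H wf_edgeD[OF wf e1] wf_edgeD[OF wf e2] by auto
    then show "e = e' \<and> v = v'" using e1 e2 by (auto split: if_splits)
  qed (auto split: if_splits)
  show ?thesis unfolding ShapeF_def shape_ok_def using A B by (simp only: sat.simps)
qed


lemma uniq_outD: "uniq_out g \<Longrightarrow> (u,e,v) \<in> edges g \<Longrightarrow> (u,e',v') \<in> edges g \<Longrightarrow> e = e' \<and> v = v'"
  unfolding uniq_out_def by blast

lemma iso_nd: "graph_iso g (nd w) \<longleftrightarrow> (\<exists>f. bij_betw f (nodes g) {0..<length w}
   \<and> (\<forall>v\<in>nodes g. w ! f v = lab g v)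
   \<and> (\<forall>u\<in>nodes g. \<forall>v\<in>nodes g. \<forall>e. (u,e,v) \<in> edges g \<longleftrightarrow> (f v = Suc (f u) \<and> Suc (f u) < length w)))"
  unfolding graph_iso_def nd_def by auto

lemma iso_ed: "graph_iso (g :: ('v, unit, 'a) graph) (ed w) \<longleftrightarrow> (\<exists>f. bij_betw f (nodes g) {0..length w}
   \<and> (\<forall>u\<in>nodes g. \<forall>v\<in>nodes g. \<forall>e. (u,e,v) \<in> edges g \<longleftrightarrow> (f v = Suc (f u) \<and> f u < length w \<and> e = w ! f u)))"
  unfolding graph_iso_def ed_def by auto

lemma ed_ndof_iso:
  assumes wf: "wf_graph g" and iso: "graph_iso g (ed w)"
  shows "graph_iso (ndof g) (nd w) \<and> shape_ok g"
proof -
  obtain f where bij: "bij_betw f (nodes g) {0..length w}"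
    and E: "\<And>u v e. u \<in> nodes g \<Longrightarrow> v \<in> nodes g \<Longrightarrow> (u,e,v) \<in> edges g \<longleftrightarrow> (f v = Suc (f u) \<and> f u < length w \<and> e = w ! f u)"
    using iso unfolding iso_ed by blast
  have inj: "inj_on f (nodes g)" and img: "f ` nodes g = {0..length w}" using bij by (auto simp: bij_betw_def)
  have ho: "hasout g u \<longleftrightarrow> f u < length w" if u: "u \<in> nodes g" for u
  proof
    assume "hasout g u"
    then obtain e v where "(u,e,v) \<in> edges g" by (auto simp: hasout_def)
    then show "f u < length w" using E[OF u] wf_edgeD[OF wf] by blast
  next
    assume lt: "f u < length w"
    then have "Suc (f u) \<in> f ` nodes g" using img by auto
    then obtain v where v: "v \<in> nodes g" "f v = Suc (f u)" by auto
    then have "(u, w ! f u, v) \<in> edges g" using E[OF u v(1)] lt by simp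
    then show "hasout g u" by (auto simp: hasout_def)
  qed
  have uq: "uniq_out g" unfolding uniq_out_def
  proof (intro allI impI)
    fix u e v e' v' assume e1: "(u,e,v) \<in> edges g" and e2: "(u,e',v') \<in> edges g"
    note n1 = wf_edgeD[OF wf e1] and n2 = wf_edgeD[OF wf e2]
    have "f v = f v'" "e = e'" using E[of u v e] E[of u v' e'] n1 n2 e1 e2 by auto
    then show "e = e' \<and> v = v'" using inj n1 n2 by (auto dest: inj_onD)
  qed
  have nd: "nodes (ndof g) = {u \<in> nodes g. f u < length w}" using ho by (auto simp: ndof_def)
  have bij2: "bij_betw f (nodes (ndof g)) {0..<length w}"
  proof (rule bij_betw_subset[OF bij])
    show "nodes (ndof g) \<subseteq> nodes g" using nd by auto
    show "f ` nodes (ndof g) = {0..<length w}" unfolding nd using img by force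
  qed
  have lab: "w ! f v = lab (ndof g) v" if v: "v \<in> nodes (ndof g)" for v
  proof -
    have "v \<in> nodes g" "f v < length w" using v nd by auto
    then have "Suc (f v) \<in> f ` nodes g" using img by auto
    then obtain y where y: "y \<in> nodes g" "f y = Suc (f v)" by auto
    then have "(v, w ! f v, y) \<in> edges g" using E[OF \<open>v \<in> nodes g\<close> y(1)] \<open>f v < length w\<close> by simp
    then show ?thesis using ndof_lab[OF uq] by metis
  qed
  have edg: "(u,e,v) \<in> edges (ndof g) \<longleftrightarrow> (f v = Suc (f u) \<and> Suc (f u) < length w)"
    if u: "u \<in> nodes (ndof g)" and v: "v \<in> nodes (ndof g)" for u v e
  proof -
    have u': "u \<in> nodes g" "f u < length w" and v': "v \<in> nodes g" "f v < length w" using u v nd by auto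
    have "(u,e,v) \<in> edges (ndof g) \<longleftrightarrow> (\<exists>e. (u,e,v) \<in> edges g)"
      using u v by (auto simp: ndof_def)
    also have "\<dots> \<longleftrightarrow> (f v = Suc (f u) \<and> Suc (f u) < length w)"
      using E[OF u'(1) v'(1)] u' v' by auto
    finally show ?thesis .
  qed
  have "graph_iso (ndof g) (nd w)" unfolding iso_nd using bij2 lab edg by blast
  moreover have "\<exists>!t. t \<in> nodes g \<and> \<not> hasout g t"
  proof -
    have "length w \<in> f ` nodes g" using img by auto
    then obtain t where t: "t \<in> nodes g" "f t = length w" by auto
    show ?thesis
    proof (rule ex1I[of _ t])
      show "t \<in> nodes g \<and> \<not> hasout g t" using t ho by auto
      fix y assume "y \<in> nodes g \<and> \<not> hasout g y"
      then have "y \<in> nodes g" "f y = length w" using ho img by (auto, force)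
      then show "y = t" using t inj by (metis inj_onD)
    qed
  qed
  ultimately show ?thesis using uq by (simp add: shape_ok_def)
qed

lemma ndof_iso_ed:
  assumes wf: "wf_graph g" and sh: "shape_ok g" and iso: "graph_iso (ndof g) (nd w)"
  shows "graph_iso g (ed w)"
proof -
  obtain t where t: "t \<in> nodes g" "\<not> hasout g t" and tu: "\<And>y. y \<in> nodes g \<Longrightarrow> \<not> hasout g y \<Longrightarrow> y = t"
    using sh unfolding shape_ok_def by blast
  have uq: "uniq_out g" using sh by (simp add: shape_ok_def)
  obtain f where bij: "bij_betw f (nodes (ndof g)) {0..<length w}"
    and L: "\<And>v. v \<in> nodes (ndof g) \<Longrightarrow> w ! f v = lab (ndof g) v"
    and E: "\<And>u v e. u \<in> nodes (ndof g) \<Longrightarrow> v \<in> nodes (ndof g) \<Longrightarrow> (u,e,v) \<in> edges (ndof g) \<longleftrightarrow> (f v = Suc (f u) \<and> Suc (f u) < length w)"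
    using iso unfolding iso_nd by blast
  have nd: "nodes (ndof g) = {u \<in> nodes g. hasout g u}" by (simp add: ndof_def)
  have ng: "nodes g = insert t (nodes (ndof g))" unfolding nd using t tu by blast
  have tn: "t \<notin> nodes (ndof g)" unfolding nd using t by blast
  define f' where "f' = f(t := length w)"
  have bij': "bij_betw f' (nodes g) {0..length w}"
  proof -
    have "bij_betw f' (nodes (ndof g)) {0..<length w}"
      using bij tn unfolding f'_def by (metis bij_betw_cong fun_upd_other)
    then have "bij_betw f' (nodes (ndof g) \<union> {t}) ({0..<length w} \<union> {f' t})"
      using tn by (intro notIn_Un_bij_betw) (auto simp: f'_def)
    moreover have "{0..<length w} \<union> {f' t} = {0..length w}" by (auto simp: f'_def)
    moreover have "nodes (ndof g) \<union> {t} = nodes g" using ng by auto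
    ultimately show ?thesis using ng by simp
  qed
  have img: "f ` nodes (ndof g) = {0..<length w}" using bij by (simp add: bij_betw_def)
  have inj: "inj_on f (nodes (ndof g))" using bij by (simp add: bij_betw_def)
  have ndE: "(u,(),v) \<in> edges (ndof g) \<longleftrightarrow> hasout g u \<and> hasout g v \<and> (\<exists>e. (u,e,v) \<in> edges g)" for u v
    by (auto simp: ndof_def)
  have EE: "(u,e,v) \<in> edges g \<longleftrightarrow> (f' v = Suc (f' u) \<and> f' u < length w \<and> e = w ! f' u)"
    if u: "u \<in> nodes g" and v: "v \<in> nodes g" for u v e
  proof
    assume uev: "(u,e,v) \<in> edges g"
    then have hu: "hasout g u" by (auto simp: hasout_def)
    then have u': "u \<in> nodes (ndof g)" "u \<noteq> t" using u nd t by auto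
    have le: "e = w ! f u" using L[OF u'(1)] ndof_lab[OF uq uev] by simp
    show "f' v = Suc (f' u) \<and> f' u < length w \<and> e = w ! f' u"
    proof (cases "v = t")
      case False
      then have v': "v \<in> nodes (ndof g)" using v ng by auto
      then have "hasout g v" using nd by auto
      then have "(u,(),v) \<in> edges (ndof g)" using ndE hu uev by blast
      then have "f v = Suc (f u) \<and> Suc (f u) < length w" using E[OF u'(1) v'] by simp
      then show ?thesis using False u'(2) le by (simp add: f'_def)
    next
      case True
      have "f u < length w" using img u'(1) by auto
      moreover have "\<not> Suc (f u) < length w"
      proof
        assume lt: "Suc (f u) < length w"
        then obtain y where y: "y \<in> nodes (ndof g)" "f y = Suc (f u)" using img by (metis atLeastLessThan_iff imageE zero_le)
        then have "(u,(),y) \<in> edges (ndof g)" using E[OF u'(1) y(1)] lt by simp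
        then obtain e' where "(u,e',y) \<in> edges g" using ndE by blast
        then have "y = v" using uniq_outD[OF uq uev] by blast
        then show False using y(1) True tn by simp
      qed
      ultimately have "f u = length w - 1" "length w > 0" by auto
      then show ?thesis using True u'(2) le by (simp add: f'_def)
    qed
  next
    assume H: "f' v = Suc (f' u) \<and> f' u < length w \<and> e = w ! f' u"
    have "u \<noteq> t" using H by (auto simp: f'_def)
    then have u': "u \<in> nodes (ndof g)" using u ng by auto
    then have hu: "hasout g u" using nd by auto
    then obtain e0 v0 where ev0: "(u,e0,v0) \<in> edges g" by (auto simp: hasout_def)
    have le: "e0 = w ! f u" using L[OF u'] ndof_lab[OF uq ev0] by simp
    have fu: "f' u = f u" using \<open>u \<noteq> t\<close> by (simp add: f'_def)
    show "(u,e,v) \<in> edges g"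
    proof (cases "v = t")
      case False
      then have v': "v \<in> nodes (ndof g)" using v ng by auto
      have "f v = Suc (f u)" using H False fu by (simp add: f'_def)
      moreover have "f v < length w" using img v' by auto
      ultimately have "(u,(),v) \<in> edges (ndof g)" using E[OF u' v'] by simp
      then obtain e1 where ev1: "(u,e1,v) \<in> edges g" using ndE by blast
      then have "e1 = e0" using uniq_outD[OF uq ev1 ev0] by blast
      then show ?thesis using ev1 le H fu by simp
    next
      case True
      have "v0 = t"
      proof (rule ccontr)
        assume "v0 \<noteq> t"
        then have v0': "v0 \<in> nodes (ndof g)" using wf_edgeD[OF wf ev0] ng by auto
        then have "hasout g v0" using nd by auto
        then have "(u,(),v0) \<in> edges (ndof g)" using ndE hu ev0 by blast
        then have "Suc (f u) < length w" using E[OF u' v0'] by simp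
        moreover have "f' v = length w" using True by (simp add: f'_def)
        ultimately show False using H fu by simp
      qed
      then show ?thesis using ev0 le H fu True by simp
    qed
  qed
  show ?thesis unfolding iso_ed using bij' EE by blast
qed


lemma out_nodes_iff: "(u,c) \<in> out_nodes T g \<longleftrightarrow> u \<in> nodes g \<and> c \<in> copies T \<and> (\<exists>!s. sat1 g (nform T c s) u)"
  by (simp add: out_nodes_def)

lemma at_nodes[simp]: "nodes (apply_trans T g) = out_nodes T g"
  by (simp add: apply_trans_def)

lemma at_edges: "((u,c1),e,(v,c2)) \<in> edges (apply_trans T g) \<longleftrightarrow>
   (u,c1) \<in> out_nodes T g \<and> (v,c2) \<in> out_nodes T g \<and> sat2 g (eform T c1 c2 e) u v"
  by (simp add: apply_trans_def)

lemma at_lab: "(u,c) \<in> out_nodes T g \<Longrightarrow> sat1 g (nform T c s) u \<longleftrightarrow> lab (apply_trans T g) (u,c) = s"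
  unfolding apply_trans_def out_nodes_def by (auto intro: theI2 the_equality[symmetric])

definition cfresh :: "nat set \<Rightarrow> nat" where "cfresh C = Suc (Max (insert 0 C))"

lemma cfresh: "finite C \<Longrightarrow> cfresh C \<notin> C"
  unfolding cfresh_def using Max_ge[of "insert 0 C"] by fastforce

definition EOT :: "('l1::finite, 'e1, 'l2::finite, 'e2) mso_trans \<Rightarrow> nat \<Rightarrow> ('l1, 'e1) mso" where
  "EOT T c = EO univ_list (\<lambda>s. nform T c s)"

lemma fv_EOT: "wf_trans T \<Longrightarrow> fv1 (EOT T c) \<subseteq> {0} \<and> fv2 (EOT T c) = {}"
  unfolding EOT_def wf_trans_def using fv_EO[of univ_list "nform T c"] by blast

lemma sat_EOT: "wf_trans T \<Longrightarrow> sat g I S (EOT T c) = (\<exists>!s. sat1 g (nform T c s) (I 0))"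
  unfolding EOT_def
  by (simp add: sat_EO) (metis sat_fv0 wf_trans_def)

lemma wf_nform: "wf_trans T \<Longrightarrow> fv1 (nform T c s) \<subseteq> {0} \<and> fv2 (nform T c s) = {}"
  unfolding wf_trans_def by blast
lemma wf_eform: "wf_trans T \<Longrightarrow> fv1 (eform T c1 c2 e) \<subseteq> {0,1} \<and> fv2 (eform T c1 c2 e) = {}"
  unfolding wf_trans_def by blast

definition clist :: "('l1, 'e1, 'l2, 'e2) mso_trans \<Rightarrow> nat list" where
  "clist T = sorted_list_of_set (copies T)"

lemma set_clist: "wf_trans T \<Longrightarrow> set (clist T) = copies T"
  unfolding clist_def wf_trans_def by simp

definition NoOutA :: "('a::finite, unit, 'b::finite, unit) mso_trans \<Rightarrow> nat \<Rightarrow> ('a, unit) mso" where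
  "NoOutA T c1 = Neg (Ex1 1 (Bor (map (\<lambda>c2. Conj (eform T c1 c2 ()) (Ex1 0 (Conj (Eq 0 1) (EOT T c2)))) (clist T))))"

definition transA :: "('a::finite, unit, 'b::finite, unit) mso_trans \<Rightarrow> (unit, 'a, unit, 'b) mso_trans" where
  "transA T = \<lparr> tdom = Conj ShapeF (rel (tdom T)),
     copies = insert (cfresh (copies T)) (copies T),
     nform = (\<lambda>c _. if c \<in> copies T then Conj (HO 0) (rel (EOT T c))
                    else if c = cfresh (copies T) then Neg (HO 0) else FF),
     eform = (\<lambda>c1 c2 e. if c1 \<in> copies T \<and> c2 \<in> copies T then
                          Conj (HO 0) (Conj (HO 1) (rel (Conj (eform T c1 c2 ()) (nform T c1 e))))
                       else if c1 \<in> copies T \<and> c2 = cfresh (copies T) then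
                          Conj (Neg (HO 1)) (Conj (HO 0) (rel (Conj (nform T c1 e) (NoOutA T c1))))
                       else FF) \<rparr>"

lemma fv_NoOutA: "wf_trans T \<Longrightarrow> fv1 (NoOutA T c1) \<subseteq> {0} \<and> fv2 (NoOutA T c1) = {}"
proof -
  assume wf: "wf_trans T"
  have "fv1 (Conj (eform T c1 c2 ()) (Ex1 0 (Conj (Eq 0 1) (EOT T c2)))) \<subseteq> {0,1}" for c2
    using wf_eform[OF wf, of c1 c2 "()"] fv_EOT[OF wf, of c2] by auto
  moreover have "fv2 (Conj (eform T c1 c2 ()) (Ex1 0 (Conj (Eq 0 1) (EOT T c2)))) = {}" for c2
    using wf_eform[OF wf, of c1 c2 "()"] fv_EOT[OF wf, of c2] by auto
  ultimately show ?thesis unfolding NoOutA_def by auto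
qed

lemma wf_transA: "wf_trans T \<Longrightarrow> wf_trans (transA T)"
proof -
  assume wf: "wf_trans T"
  have cl: "closed (tdom T)" and fin: "finite (copies T)" using wf by (auto simp: wf_trans_def)
  have "closed (tdom (transA T))"
    using closed_ShapeF cl fv_rel[of "tdom T"] by (auto simp: transA_def closed_def)
  moreover have "finite (copies (transA T))" using fin by (simp add: transA_def)
  moreover have "fv1 (nform (transA T) c s) \<subseteq> {0} \<and> fv2 (nform (transA T) c s) = {}" for c s
    using fv_rel[of "EOT T c"] fv_EOT[OF wf, of c] by (auto simp: transA_def)
  moreover have "fv1 (eform (transA T) c1 c2 e) \<subseteq> {0,1} \<and> fv2 (eform (transA T) c1 c2 e) = {}" for c1 c2 e
    using fv_rel[of "Conj (eform T c1 c2 ()) (nform T c1 e)"] fv_rel[of "Conj (nform T c1 e) (NoOutA T c1)"]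
      wf_eform[OF wf, of c1 c2 "()"] wf_nform[OF wf, of c1 e] fv_NoOutA[OF wf, of c1]
    by (auto simp: transA_def)
  ultimately show ?thesis unfolding wf_trans_def by blast
qed


lemma Ex1_unit[simp]: "(\<exists>!x::unit. P x) = P ()"
  by (metis (full_types) old.unit.exhaust)

context
  fixes T :: "('a::finite, unit, 'b::finite, unit) mso_trans" and g :: "(nat, unit, 'a) graph"
  assumes wfT: "wf_trans T" and wf: "wf_graph g" and uq: "uniq_out g"
begin

lemma A_nform_sat:
  assumes u: "u \<in> nodes g" and c: "c \<in> copies T"
  shows "sat1 g (nform (transA T) c s) u \<longleftrightarrow> u \<in> nodes (ndof g) \<and> (\<exists>!s. sat1 (ndof g) (nform T c s) u)"
proof -
  have "sat1 g (nform (transA T) c s) u = (hasout g u \<and> sat g (\<lambda>_. u) (\<lambda>_. {}) (rel (EOT T c)))"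
    using c by (simp add: transA_def sat1_def sat_HO[OF wf])
  also have "\<dots> = (u \<in> nodes (ndof g) \<and> (\<exists>!s. sat1 (ndof g) (nform T c s) u))"
  proof (cases "hasout g u")
    case True
    then have un: "u \<in> nodes (ndof g)" using u by (simp add: ndof_def)
    have "sat g (\<lambda>_. u) (\<lambda>_. {}) (rel (EOT T c)) = sat (ndof g) (\<lambda>_. u) (\<lambda>_. {}) (EOT T c)"
      by (rule rel_sat[OF wf uq]) (use un fv_EOT[OF wfT, of c] in auto)
    then show ?thesis using True un sat_EOT[OF wfT] by simp
  next
    case False
    then show ?thesis by (simp add: ndof_def)
  qed
  finally show ?thesis .
qed

lemma A_out_nodes:
  assumes t: "t \<in> nodes g" "\<not> hasout g t" and tu: "\<And>y. y \<in> nodes g \<Longrightarrow> \<not> hasout g y \<Longrightarrow> y = t"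
  shows "out_nodes (transA T) g = insert (t, cfresh (copies T)) (out_nodes T (ndof g))"
proof -
  have fin: "finite (copies T)" using wfT by (simp add: wf_trans_def)
  note cf = cfresh[OF fin]
  have nd: "nodes (ndof g) = {u \<in> nodes g. hasout g u}" by (simp add: ndof_def)
  show ?thesis
  proof (intro set_eqI iffI)
    fix a assume a: "a \<in> out_nodes (transA T) g"
    obtain u c where ac: "a = (u,c)" by (cases a)
    have u: "u \<in> nodes g" and c: "c \<in> insert (cfresh (copies T)) (copies T)"
      and ex: "\<exists>!s. sat1 g (nform (transA T) c s) u"
      using a unfolding ac out_nodes_iff by (auto simp: transA_def)
    show "a \<in> insert (t, cfresh (copies T)) (out_nodes T (ndof g))"
    proof (cases "c \<in> copies T")
      case True
      then have "(u,c) \<in> out_nodes T (ndof g)" using ex A_nform_sat[OF u True] by (simp add: out_nodes_iff)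
      then show ?thesis by (simp add: ac)
    next
      case False
      then have "c = cfresh (copies T)" using c by simp
      then have "\<not> hasout g u" using ex cf by (simp add: transA_def sat1_def sat_HO[OF wf])
      then show ?thesis using tu[OF u] ac \<open>c = cfresh (copies T)\<close> by simp
    qed
  next
    fix a assume a: "a \<in> insert (t, cfresh (copies T)) (out_nodes T (ndof g))"
    obtain u c where ac: "a = (u,c)" by (cases a)
    show "a \<in> out_nodes (transA T) g"
    proof (cases "a = (t, cfresh (copies T))")
      case True
      then show ?thesis using t cf by (simp add: out_nodes_iff transA_def sat1_def sat_HO[OF wf])
    next
      case False
      then have "(u,c) \<in> out_nodes T (ndof g)" using a ac by auto
      then have un: "u \<in> nodes (ndof g)" and c: "c \<in> copies T" and ex: "\<exists>!s. sat1 (ndof g) (nform T c s) u"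
        unfolding out_nodes_iff by auto
      have u: "u \<in> nodes g" using un nd by simp
      show ?thesis unfolding ac out_nodes_iff using A_nform_sat[OF u c] un ex c u
        by (simp add: transA_def)
    qed
  qed
qed

lemma A_edge_sat1:
  assumes c1: "c1 \<in> copies T" and c2: "c2 \<in> copies T" and u: "u \<in> nodes (ndof g)" and v: "v \<in> nodes (ndof g)"
  shows "sat2 g (eform (transA T) c1 c2 e) u v \<longleftrightarrow> sat2 (ndof g) (eform T c1 c2 ()) u v \<and> sat1 (ndof g) (nform T c1 e) u"
proof -
  have hu: "hasout g u" "hasout g v" using u v by (auto simp: ndof_def)
  let ?I = "\<lambda>i::nat. if i = 0 then u else v"
  have "sat2 g (eform (transA T) c1 c2 e) u v = sat g ?I (\<lambda>_. {}) (rel (Conj (eform T c1 c2 ()) (nform T c1 e)))"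
    using c1 c2 hu by (simp add: transA_def sat2_def sat_HO[OF wf])
  also have "\<dots> = sat (ndof g) ?I (\<lambda>_. {}) (Conj (eform T c1 c2 ()) (nform T c1 e))"
    by (rule rel_sat[OF wf uq]) (use u v wf_eform[OF wfT, of c1 c2 "()"] wf_nform[OF wfT, of c1 e] in auto)
  also have "\<dots> = (sat2 (ndof g) (eform T c1 c2 ()) u v \<and> sat1 (ndof g) (nform T c1 e) u)"
    using sat_fv01[of "eform T c1 c2 ()" "ndof g" ?I] sat_fv0[of "nform T c1 e" "ndof g" ?I]
      wf_eform[OF wfT, of c1 c2 "()"] wf_nform[OF wfT, of c1 e] by simp
  finally show ?thesis .
qed

lemma A_edge_sat2:
  assumes c1: "c1 \<in> copies T" and u: "u \<in> nodes (ndof g)"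
  shows "sat2 g (eform (transA T) c1 (cfresh (copies T)) e) u v \<longleftrightarrow>
     \<not> hasout g v \<and> sat1 (ndof g) (nform T c1 e) u \<and>
     \<not> (\<exists>b\<in>out_nodes T (ndof g). sat2 (ndof g) (eform T c1 (snd b) ()) u (fst b))"
proof -
  have fin: "finite (copies T)" using wfT by (simp add: wf_trans_def)
  note cf = cfresh[OF fin]
  have hu: "hasout g u" using u by (auto simp: ndof_def)
  let ?I = "\<lambda>i::nat. if i = 0 then u else v"
  have "sat2 g (eform (transA T) c1 (cfresh (copies T)) e) u v = (\<not> hasout g v \<and> sat g ?I (\<lambda>_. {}) (rel (Conj (nform T c1 e) (NoOutA T c1))))"
    using c1 cf hu by (simp add: transA_def sat2_def sat_HO[OF wf])
  also have "sat g ?I (\<lambda>_. {}) (rel (Conj (nform T c1 e) (NoOutA T c1))) = sat (ndof g) ?I (\<lambda>_. {}) (Conj (nform T c1 e) (NoOutA T c1))"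
    by (rule rel_sat[OF wf uq]) (use u wf_nform[OF wfT, of c1 e] fv_NoOutA[OF wfT, of c1] in auto)
  also have "sat (ndof g) ?I (\<lambda>_. {}) (NoOutA T c1) = (\<not> (\<exists>b\<in>out_nodes T (ndof g). sat2 (ndof g) (eform T c1 (snd b) ()) u (fst b)))"
  proof -
    have "sat (ndof g) ?I (\<lambda>_. {}) (NoOutA T c1) = (\<not> (\<exists>y\<in>nodes (ndof g). \<exists>c2\<in>copies T.
        sat2 (ndof g) (eform T c1 c2 ()) u y \<and> (\<exists>!s. sat1 (ndof g) (nform T c2 s) y)))"
    proof -
      have a: "sat (ndof g) (?I(1:=y)) (\<lambda>_. {}) (eform T c1 c2 ()) = sat2 (ndof g) (eform T c1 c2 ()) u y" for y c2
        using sat_fv01[of "eform T c1 c2 ()" "ndof g" "?I(1:=y)"] wf_eform[OF wfT, of c1 c2 "()"] by simp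
      have b: "sat (ndof g) (?I(1:=y, 0:=y')) (\<lambda>_. {}) (EOT T c2) = (\<exists>!s. sat1 (ndof g) (nform T c2 s) y')" for y y' c2
        unfolding sat_EOT[OF wfT] by simp
      show ?thesis unfolding NoOutA_def using a b set_clist[OF wfT] by auto
    qed
    also have "\<dots> = (\<not> (\<exists>b\<in>out_nodes T (ndof g). sat2 (ndof g) (eform T c1 (snd b) ()) u (fst b)))"
      unfolding out_nodes_def by auto
    finally show ?thesis .
  qed
  moreover have "sat (ndof g) ?I (\<lambda>_. {}) (nform T c1 e) = sat1 (ndof g) (nform T c1 e) u"
    using sat_fv0[of "nform T c1 e" "ndof g" ?I] wf_nform[OF wfT, of c1 e] by simp
  ultimately show ?thesis by simp
qed

end


lemma A_out_iso:
  fixes T :: "('a::finite, unit, 'b::finite, unit) mso_trans" and g :: "(nat, unit, 'a) graph"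
  assumes wfT: "wf_trans T" and wf: "wf_graph g" and sh: "shape_ok g"
    and iso: "graph_iso (apply_trans T (ndof g)) (nd z)"
  shows "graph_iso (apply_trans (transA T) g) (ed z)"
proof -
  obtain t where t: "t \<in> nodes g" "\<not> hasout g t" and tu: "\<And>y. y \<in> nodes g \<Longrightarrow> \<not> hasout g y \<Longrightarrow> y = t"
    using sh unfolding shape_ok_def by blast
  have uq: "uniq_out g" using sh by (simp add: shape_ok_def)
  have fin: "finite (copies T)" using wfT by (simp add: wf_trans_def)
  define cs where "cs = cfresh (copies T)"
  have cs: "cs \<notin> copies T" using cfresh[OF fin] by (simp add: cs_def)
  define h where "h = ndof g"
  define OT where "OT = out_nodes T h"
  obtain \<phi> where bij: "bij_betw \<phi> OT {0..<length z}"
    and L: "\<And>a. a \<in> OT \<Longrightarrow> z ! \<phi> a = lab (apply_trans T h) a"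
    and E: "\<And>a b e. a \<in> OT \<Longrightarrow> b \<in> OT \<Longrightarrow> (a,e,b) \<in> edges (apply_trans T h) \<longleftrightarrow> (\<phi> b = Suc (\<phi> a) \<and> Suc (\<phi> a) < length z)"
    using iso unfolding iso_nd h_def OT_def at_nodes by blast
  have img: "\<phi> ` OT = {0..<length z}" using bij by (simp add: bij_betw_def)
  have outs: "out_nodes (transA T) g = insert (t, cs) OT"
    unfolding OT_def h_def cs_def by (rule A_out_nodes[OF wfT wf uq t tu])
  have tO: "(t, cs) \<notin> OT" using cs unfolding OT_def by (simp add: out_nodes_iff)
  define \<psi> where "\<psi> = \<phi>((t,cs) := length z)"
  have bij': "bij_betw \<psi> (out_nodes (transA T) g) {0..length z}"
  proof -
    have "bij_betw \<psi> OT {0..<length z}"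
      using bij tO unfolding \<psi>_def by (metis bij_betw_cong fun_upd_other)
    then have "bij_betw \<psi> (OT \<union> {(t,cs)}) ({0..<length z} \<union> {\<psi> (t,cs)})"
      using tO by (intro notIn_Un_bij_betw) (auto simp: \<psi>_def)
    moreover have "{0..<length z} \<union> {\<psi> (t,cs)} = {0..length z}" by (auto simp: \<psi>_def)
    ultimately show ?thesis using outs by simp
  qed
  have EE: "(a,e,b) \<in> edges (apply_trans (transA T) g) \<longleftrightarrow> (\<psi> b = Suc (\<psi> a) \<and> \<psi> a < length z \<and> e = z ! \<psi> a)"
    if a: "a \<in> out_nodes (transA T) g" and b: "b \<in> out_nodes (transA T) g" for a b e
  proof -
    obtain u c1 where ac: "a = (u,c1)" by (cases a)
    obtain v c2 where bc: "b = (v,c2)" by (cases b)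
    have LHS: "(a,e,b) \<in> edges (apply_trans (transA T) g) \<longleftrightarrow> sat2 g (eform (transA T) c1 c2 e) u v"
      using a b unfolding ac bc at_edges by simp
    show ?thesis
    proof (cases "a = (t,cs)")
      case True
      then have "c1 = cs" using ac by simp
      then have "eform (transA T) c1 c2 e = FF" using cs by (simp add: transA_def cs_def)
      then show ?thesis using LHS True by (simp add: \<psi>_def sat2_def)
    next
      case False
      then have aO: "a \<in> OT" using a outs by simp
      then have c1: "c1 \<in> copies T" and u: "u \<in> nodes h" using aO ac unfolding OT_def by (auto simp: out_nodes_iff)
      have pa: "\<psi> a = \<phi> a" using False by (simp add: \<psi>_def)
      have lab_iff: "sat1 h (nform T c1 e) u \<longleftrightarrow> e = z ! \<phi> a"
        using at_lab[of u c1 T h e] aO L[OF aO] unfolding ac OT_def by auto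
      show ?thesis
      proof (cases "b = (t,cs)")
        case False
        then have bO: "b \<in> OT" using b outs by simp
        then have c2: "c2 \<in> copies T" and v: "v \<in> nodes h" using bO bc unfolding OT_def by (auto simp: out_nodes_iff)
        have pb: "\<psi> b = \<phi> b" using False by (simp add: \<psi>_def)
        have "sat2 g (eform (transA T) c1 c2 e) u v \<longleftrightarrow> sat2 h (eform T c1 c2 ()) u v \<and> sat1 h (nform T c1 e) u"
          unfolding h_def by (rule A_edge_sat1[OF wfT wf uq c1 c2]) (use u v h_def in auto)
        also have "sat2 h (eform T c1 c2 ()) u v \<longleftrightarrow> (a,(),b) \<in> edges (apply_trans T h)"
          using aO bO unfolding ac bc at_edges OT_def by simp
        also have "\<dots> \<longleftrightarrow> (\<phi> b = Suc (\<phi> a) \<and> Suc (\<phi> a) < length z)" using E[OF aO bO] .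
        finally have "sat2 g (eform (transA T) c1 c2 e) u v \<longleftrightarrow> (\<phi> b = Suc (\<phi> a) \<and> Suc (\<phi> a) < length z) \<and> e = z ! \<phi> a"
          using lab_iff by simp
        moreover have "\<phi> b < length z" using img bO by auto
        ultimately show ?thesis using LHS pa pb by auto
      next
        case True
        then have vt: "v = t" "c2 = cs" using bc by auto
        have "sat2 g (eform (transA T) c1 c2 e) u v \<longleftrightarrow>
            \<not> hasout g v \<and> sat1 h (nform T c1 e) u \<and> \<not> (\<exists>b\<in>OT. sat2 h (eform T c1 (snd b) ()) u (fst b))"
          unfolding vt cs_def h_def OT_def by (rule A_edge_sat2[OF wfT wf uq c1]) (use u h_def in auto)
        also have "(\<exists>b\<in>OT. sat2 h (eform T c1 (snd b) ()) u (fst b)) \<longleftrightarrow> (\<exists>b\<in>OT. (a,(),b) \<in> edges (apply_trans T h))"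
        proof -
          have "sat2 h (eform T c1 (snd b) ()) u (fst b) \<longleftrightarrow> (a,(),b) \<in> edges (apply_trans T h)" if "b \<in> OT" for b
            using that aO unfolding ac OT_def by (cases b) (simp add: at_edges)
          then show ?thesis by blast
        qed
        also have "\<dots> \<longleftrightarrow> Suc (\<phi> a) < length z"
        proof
          assume "\<exists>b\<in>OT. (a,(),b) \<in> edges (apply_trans T h)"
          then show "Suc (\<phi> a) < length z" using E aO by blast
        next
          assume lt: "Suc (\<phi> a) < length z"
          then obtain b where "b \<in> OT" "\<phi> b = Suc (\<phi> a)" using img
            by (metis atLeastLessThan_iff imageE zero_le)
          then show "\<exists>b\<in>OT. (a,(),b) \<in> edges (apply_trans T h)" using E[OF aO] lt by blast
        qed
        finally have "sat2 g (eform (transA T) c1 c2 e) u v \<longleftrightarrow> \<not> Suc (\<phi> a) < length z \<and> e = z ! \<phi> a"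
          using lab_iff t vt by auto
        moreover have "\<phi> a < length z" using img aO by auto
        moreover have "\<psi> b = length z" using True by (simp add: \<psi>_def)
        ultimately show ?thesis using LHS pa by auto
      qed
    qed
  qed
  show ?thesis unfolding iso_ed at_nodes using bij' EE by blast
qed


lemma ex_nd_rel: "(\<exists>(g0,h)\<in>nd_rel m. P g0 h) \<longleftrightarrow> (\<exists>w z. (w,z) \<in> m \<and> P (nd w) (nd z))"
  unfolding nd_rel_def by auto
lemma all_nd_rel: "(\<forall>(g0,h)\<in>nd_rel m. P g0 h) \<longleftrightarrow> (\<forall>w z. (w,z) \<in> m \<longrightarrow> P (nd w) (nd z))"
  unfolding nd_rel_def by auto
lemma ex_ed_rel: "(\<exists>(g0,h)\<in>ed_rel m. P g0 h) \<longleftrightarrow> (\<exists>w z. (w,z) \<in> m \<and> P (ed w) (ed z))"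
  unfolding ed_rel_def by auto
lemma all_ed_rel: "(\<forall>(g0,h)\<in>ed_rel m. P g0 h) \<longleftrightarrow> (\<forall>w z. (w,z) \<in> m \<longrightarrow> P (ed w) (ed z))"
  unfolding ed_rel_def by auto

lemma mso_def_nd: "mso_definable (nd_rel m) \<longleftrightarrow> (\<exists>T. wf_trans T \<and> (\<forall>g::(nat,'a,unit) graph. wf_graph g \<longrightarrow>
   (sat0 g (tdom T) \<longleftrightarrow> (\<exists>w z. (w,z) \<in> m \<and> graph_iso g (nd w)))
 \<and> (\<forall>w z. (w,z) \<in> m \<longrightarrow> graph_iso g (nd w) \<longrightarrow> graph_iso (apply_trans T g) (nd (z :: 'b list)))))"
  unfolding mso_definable_def ex_nd_rel[where P="\<lambda>g0 h. graph_iso _ g0"] all_nd_rel ..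

lemma mso_def_ed: "mso_definable (ed_rel m) \<longleftrightarrow> (\<exists>T. wf_trans T \<and> (\<forall>g::(nat,unit,'a) graph. wf_graph g \<longrightarrow>
   (sat0 g (tdom T) \<longleftrightarrow> (\<exists>w z. (w,z) \<in> m \<and> graph_iso g (ed w)))
 \<and> (\<forall>w z. (w,z) \<in> m \<longrightarrow> graph_iso g (ed w) \<longrightarrow> graph_iso (apply_trans T g) (ed (z :: 'b list)))))"
  unfolding mso_definable_def ex_ed_rel[where P="\<lambda>g0 h. graph_iso _ g0"] all_ed_rel ..

lemma wf_ndof: "wf_graph g \<Longrightarrow> wf_graph (ndof g)"
  unfolding wf_graph_def ndof_def hasout_def by (auto elim: finite_subset[rotated])

lemma wf_nd: "wf_graph (nd w)"
  unfolding wf_graph_def nd_def by auto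

lemma graph_iso_refl: "graph_iso g g"
  unfolding graph_iso_def by (rule exI[of _ id]) auto

lemma dirA:
  fixes m :: "('a::finite list \<times> 'b::finite list) set"
  assumes "mso_definable (nd_rel m)"
  shows "mso_definable (ed_rel m) \<and> (\<forall>z. ([], z) \<in> m \<longrightarrow> z = [])"
proof -
  obtain T :: "('a, unit, 'b, unit) mso_trans" where wfT: "wf_trans T"
    and D: "\<And>g::(nat,'a,unit) graph. wf_graph g \<Longrightarrow> sat0 g (tdom T) \<longleftrightarrow> (\<exists>w z. (w,z) \<in> m \<and> graph_iso g (nd w))"
    and O: "\<And>g::(nat,'a,unit) graph. \<And>w z. wf_graph g \<Longrightarrow> (w,z) \<in> m \<Longrightarrow> graph_iso g (nd w) \<Longrightarrow> graph_iso (apply_trans T g) (nd z)"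
    using assms unfolding mso_def_nd by blast
  have clT: "closed (tdom T)" using wfT by (simp add: wf_trans_def)
  have "mso_definable (ed_rel m)"
    unfolding mso_def_ed
  proof (intro exI conjI allI impI)
    show "wf_trans (transA T)" by (rule wf_transA[OF wfT])
    fix g :: "(nat, unit, 'a) graph" assume wf: "wf_graph g"
    have cl: "closed (tdom (transA T))" using wf_transA[OF wfT] by (simp add: wf_trans_def)
    have "sat0 g (tdom (transA T)) \<longleftrightarrow> shape_ok g \<and> sat g (\<lambda>_. 0) (\<lambda>_. {}) (rel (tdom T))"
      using sat0_closed[OF cl, of g "\<lambda>_. 0"] by (simp add: transA_def sat_ShapeF[OF wf])
    also have "\<dots> \<longleftrightarrow> (\<exists>w z. (w,z) \<in> m \<and> graph_iso g (ed w))"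
    proof
      assume H: "shape_ok g \<and> sat g (\<lambda>_. 0) (\<lambda>_. {}) (rel (tdom T))"
      then have uq: "uniq_out g" by (simp add: shape_ok_def)
      have "sat (ndof g) (\<lambda>_. 0) (\<lambda>_. {}) (tdom T)"
        using H rel_sat[OF wf uq, of "tdom T" "\<lambda>_. 0" "\<lambda>_. {}"] clT by (simp add: closed_def)
      then have "sat0 (ndof g) (tdom T)" by (simp add: sat0_def, blast)
      then obtain w z where "(w,z) \<in> m" "graph_iso (ndof g) (nd w)" using D[OF wf_ndof[OF wf]] by blast
      then show "\<exists>w z. (w,z) \<in> m \<and> graph_iso g (ed w)" using ndof_iso_ed[OF wf] H by blast
    next
      assume "\<exists>w z. (w,z) \<in> m \<and> graph_iso g (ed w)"
      then obtain w z where wz: "(w,z) \<in> m" "graph_iso g (ed w)" by blast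
      then have i: "graph_iso (ndof g) (nd w)" and sh: "shape_ok g" using ed_ndof_iso[OF wf] by auto
      then have uq: "uniq_out g" by (simp add: shape_ok_def)
      have "sat0 (ndof g) (tdom T)" using D[OF wf_ndof[OF wf]] wz i by blast
      then have "sat (ndof g) (\<lambda>_. 0) (\<lambda>_. {}) (tdom T)" using sat0_closed[OF clT] by blast
      then show "shape_ok g \<and> sat g (\<lambda>_. 0) (\<lambda>_. {}) (rel (tdom T))"
        using sh rel_sat[OF wf uq, of "tdom T" "\<lambda>_. 0" "\<lambda>_. {}"] clT by (simp add: closed_def)
    qed
    finally show "sat0 g (tdom (transA T)) \<longleftrightarrow> (\<exists>w z. (w,z) \<in> m \<and> graph_iso g (ed w))" .
    fix w z assume wz: "(w,z) \<in> m" and i: "graph_iso g (ed w)"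
    then have i': "graph_iso (ndof g) (nd w)" and sh: "shape_ok g" using ed_ndof_iso[OF wf] by auto
    have "graph_iso (apply_trans T (ndof g)) (nd z)" by (rule O[OF wf_ndof[OF wf] wz i'])
    then show "graph_iso (apply_trans (transA T) g) (ed z)" by (rule A_out_iso[OF wfT wf sh])
  qed
  moreover have "z = []" if z: "([], z) \<in> m" for z
  proof -
    have "graph_iso (apply_trans T (nd [])) (nd z)" using O[OF wf_nd z graph_iso_refl] .
    moreover have "nodes (apply_trans T (nd [])) = {}" by (simp add: out_nodes_def nd_def)
    ultimately show ?thesis unfolding graph_iso_def by (auto simp: nd_def bij_betw_def)
  qed
  ultimately show ?thesis by blast
qed


definition edof :: "nat \<Rightarrow> (nat, 'a, unit) graph \<Rightarrow> (nat, unit, 'a) graph" where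
  "edof t g = \<lparr> nodes = insert t (nodes g),
     edges = {(u, lab g u, v) | u v. (u,(),v) \<in> edges g} \<union> {(u, lab g u, t) | u. u \<in> nodes g \<and> \<not> hasout g u},
     lab = (\<lambda>_. ()) \<rparr>"

lemma edof_edges: "(a,e,b) \<in> edges (edof t g) \<longleftrightarrow> ((a,(),b) \<in> edges g \<and> e = lab g a) \<or> (b = t \<and> a \<in> nodes g \<and> \<not> hasout g a \<and> e = lab g a)"
  unfolding edof_def by auto

lemma edof_nodes[simp]: "nodes (edof t g) = insert t (nodes g)"
  by (simp add: edof_def)

lemma wf_edof: "wf_graph g \<Longrightarrow> wf_graph (edof t g)"
  unfolding wf_graph_def by (auto simp: edof_edges)

fun vtr :: "(nat \<Rightarrow> bool) \<Rightarrow> (nat \<Rightarrow> bool) \<Rightarrow> (unit, 'a::finite) mso \<Rightarrow> ('a, unit) mso" where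
  "vtr \<kappa> \<sigma> (Lab s x) = TT"
| "vtr \<kappa> \<sigma> (Edg e x y) = (if \<kappa> x then FF else if \<kappa> y then Conj (Lab e x) (Neg (HO x))
                            else Conj (Edg () x y) (Lab e x))"
| "vtr \<kappa> \<sigma> (Eq x y) = (if \<kappa> x \<and> \<kappa> y then TT else if \<kappa> x \<or> \<kappa> y then FF else Eq x y)"
| "vtr \<kappa> \<sigma> (In x X) = (if \<kappa> x then (if \<sigma> X then TT else FF) else In x X)"
| "vtr \<kappa> \<sigma> (Neg p) = Neg (vtr \<kappa> \<sigma> p)"
| "vtr \<kappa> \<sigma> (Conj p q) = Conj (vtr \<kappa> \<sigma> p) (vtr \<kappa> \<sigma> q)"
| "vtr \<kappa> \<sigma> (Ex1 x p) = Disj (Ex1 x (vtr (\<kappa>(x:=False)) \<sigma> p)) (vtr (\<kappa>(x:=True)) \<sigma> p)"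
| "vtr \<kappa> \<sigma> (Ex2 X p) = Ex2 X (Disj (vtr \<kappa> (\<sigma>(X:=False)) p) (vtr \<kappa> (\<sigma>(X:=True)) p))"

lemma fv_vtr: "fv1 (vtr \<kappa> \<sigma> p) \<subseteq> {x \<in> fv1 p. \<not> \<kappa> x} \<and> fv2 (vtr \<kappa> \<sigma> p) \<subseteq> fv2 p"
proof (induction p arbitrary: \<kappa> \<sigma>)
  case (Ex1 x p)
  have a: "fv1 (vtr (\<kappa>(x:=False)) \<sigma> p) \<subseteq> {y \<in> fv1 p. \<not> (\<kappa>(x:=False)) y}" "fv2 (vtr (\<kappa>(x:=False)) \<sigma> p) \<subseteq> fv2 p"
    using Ex1.IH by blast+
  have b: "fv1 (vtr (\<kappa>(x:=True)) \<sigma> p) \<subseteq> {y \<in> fv1 p. \<not> (\<kappa>(x:=True)) y}" "fv2 (vtr (\<kappa>(x:=True)) \<sigma> p) \<subseteq> fv2 p"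
    using Ex1.IH by blast+
  have c: "{y \<in> fv1 p. \<not> (\<kappa>(x:=False)) y} - {x} \<subseteq> {y \<in> fv1 p - {x}. \<not> \<kappa> y}"
    "{y \<in> fv1 p. \<not> (\<kappa>(x:=True)) y} \<subseteq> {y \<in> fv1 p - {x}. \<not> \<kappa> y}" by auto
  show ?case using a b c by (simp only: vtr.simps fv_Disj fv1.simps fv2.simps) blast
next
  case (Ex2 X p)
  have a: "fv1 (vtr \<kappa> (\<sigma>(X:=False)) p) \<subseteq> {y \<in> fv1 p. \<not> \<kappa> y}" "fv2 (vtr \<kappa> (\<sigma>(X:=False)) p) \<subseteq> fv2 p"
    "fv1 (vtr \<kappa> (\<sigma>(X:=True)) p) \<subseteq> {y \<in> fv1 p. \<not> \<kappa> y}" "fv2 (vtr \<kappa> (\<sigma>(X:=True)) p) \<subseteq> fv2 p"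
    using Ex2.IH by blast+
  show ?case using a by (simp only: vtr.simps fv_Disj fv1.simps fv2.simps) blast
next
  case (Conj p q)
  show ?case using Conj.IH[of \<kappa> \<sigma>] by auto
next
  case (Neg p)
  show ?case using Neg.IH[of \<kappa> \<sigma>] by auto
qed auto

lemma vtr_sat:
  assumes wf: "wf_graph g" and t: "t \<notin> nodes g"
  shows "(\<forall>x\<in>fv1 p. \<not> \<kappa> x \<longrightarrow> I x \<in> nodes g) \<Longrightarrow> (\<forall>X\<in>fv2 p. S X \<subseteq> nodes g) \<Longrightarrow>
    sat g I S (vtr \<kappa> \<sigma> p) = sat (edof t (g :: (nat, 'a::finite, unit) graph)) (\<lambda>x. if \<kappa> x then t else I x) (\<lambda>X. if \<sigma> X then insert t (S X) else S X) p"
proof (induction p arbitrary: \<kappa> \<sigma> I S)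
  case (Lab s x)
  then show ?case by (simp add: edof_def)
next
  case (Edg e x y)
  have nt: "(t, e', v) \<notin> edges g" "(v, e', t) \<notin> edges g" for e' v using wf_edgeD[OF wf] t by blast+
  show ?case
  proof (cases "\<kappa> x")
    case True
    then show ?thesis using nt t by (auto simp: edof_edges)
  next
    case False
    then have x: "I x \<in> nodes g" using Edg.prems by simp
    show ?thesis
    proof (cases "\<kappa> y")
      case True
      then show ?thesis using False x nt by (auto simp: edof_edges sat_HO[OF wf])
    next
      case False2: False
      then have y: "I y \<in> nodes g" using Edg.prems by simp
      then show ?thesis using False False2 x t by (auto simp: edof_edges)
    qed
  qed
next
  case (Eq x y)
  then show ?case using t by auto
next
  case (In x X)
  then show ?case using t by auto
next
  case (Neg p)
  then show ?case by simp
next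
  case (Conj p q)
  have "sat g I S (vtr \<kappa> \<sigma> p) = sat (edof t g) (\<lambda>x. if \<kappa> x then t else I x) (\<lambda>X. if \<sigma> X then insert t (S X) else S X) p"
    by (rule Conj.IH(1)) (use Conj.prems in auto)
  moreover have "sat g I S (vtr \<kappa> \<sigma> q) = sat (edof t g) (\<lambda>x. if \<kappa> x then t else I x) (\<lambda>X. if \<sigma> X then insert t (S X) else S X) q"
    by (rule Conj.IH(2)) (use Conj.prems in auto)
  ultimately show ?case by simp
next
  case (Ex1 x p)
  let ?Ih = "\<lambda>x. if \<kappa> x then t else I x" and ?Sh = "\<lambda>X. if \<sigma> X then insert t (S X) else S X"
  have A: "sat g (I(x:=v)) S (vtr (\<kappa>(x:=False)) \<sigma> p) = sat (edof t g) (?Ih(x:=v)) ?Sh p" if v: "v \<in> nodes g" for v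
  proof -
    have "sat g (I(x:=v)) S (vtr (\<kappa>(x:=False)) \<sigma> p) = sat (edof t g) (\<lambda>y. if (\<kappa>(x:=False)) y then t else (I(x:=v)) y) ?Sh p"
      by (rule Ex1.IH) (use Ex1.prems v in auto)
    moreover have "(\<lambda>y. if (\<kappa>(x:=False)) y then t else (I(x:=v)) y) = ?Ih(x:=v)" by auto
    ultimately show ?thesis by simp
  qed
  have B: "sat g I S (vtr (\<kappa>(x:=True)) \<sigma> p) = sat (edof t g) (?Ih(x:=t)) ?Sh p"
  proof -
    have "sat g I S (vtr (\<kappa>(x:=True)) \<sigma> p) = sat (edof t g) (\<lambda>y. if (\<kappa>(x:=True)) y then t else I y) ?Sh p"
      by (rule Ex1.IH) (use Ex1.prems in auto)
    moreover have "(\<lambda>y. if (\<kappa>(x:=True)) y then t else I y) = ?Ih(x:=t)" by auto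
    ultimately show ?thesis by simp
  qed
  show ?case using A B by auto
next
  case (Ex2 X p)
  let ?Ih = "\<lambda>x. if \<kappa> x then t else I x" and ?Sh = "\<lambda>X. if \<sigma> X then insert t (S X) else S X"
  have A: "sat g I (S(X:=V)) (vtr \<kappa> (\<sigma>(X:=b)) p) = sat (edof t g) ?Ih (?Sh(X := (if b then insert t V else V))) p"
    if V: "V \<subseteq> nodes g" for V b
  proof -
    have "sat g I (S(X:=V)) (vtr \<kappa> (\<sigma>(X:=b)) p) = sat (edof t g) ?Ih (\<lambda>Y. if (\<sigma>(X:=b)) Y then insert t ((S(X:=V)) Y) else (S(X:=V)) Y) p"
      by (rule Ex2.IH) (use Ex2.prems V in auto)
    moreover have "(\<lambda>Y. if (\<sigma>(X:=b)) Y then insert t ((S(X:=V)) Y) else (S(X:=V)) Y) = ?Sh(X := (if b then insert t V else V))"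
      by (rule ext) auto
    ultimately show ?thesis by simp
  qed
  show ?case
  proof
    assume "sat g I S (vtr \<kappa> \<sigma> (Ex2 X p))"
    then obtain V b where V: "V \<subseteq> nodes g" and s: "sat g I (S(X:=V)) (vtr \<kappa> (\<sigma>(X:=b)) p)"
      by auto
    moreover have "(if b then insert t V else V) \<subseteq> insert t (nodes g)" using V by (cases b) auto
    ultimately show "sat (edof t g) ?Ih ?Sh (Ex2 X p)" using A[OF V, of b]
        by (simp only: sat.simps edof_nodes) blast
  next
    assume "sat (edof t g) ?Ih ?Sh (Ex2 X p)"
    then obtain W where W: "W \<subseteq> insert t (nodes g)" and s: "sat (edof t g) ?Ih (?Sh(X:=W)) p" by auto
    define V where "V = W - {t}"
    define b where "b = (t \<in> W)"
    have V: "V \<subseteq> nodes g" using W by (auto simp: V_def)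
    have "W = (if b then insert t V else V)" by (auto simp: V_def b_def)
    then have "sat g I (S(X:=V)) (vtr \<kappa> (\<sigma>(X:=b)) p)" using A[OF V, of b] s by simp
    then show "sat g I S (vtr \<kappa> \<sigma> (Ex2 X p))" using V by (cases b) auto
  qed
qed


lemma edof_iso_nd:
  assumes wf: "wf_graph g" and t: "t \<notin> nodes g" and iso: "graph_iso (edof t g) (ed w)"
  shows "graph_iso g (nd w)"
proof -
  obtain f where bij: "bij_betw f (insert t (nodes g)) {0..length w}"
    and E: "\<And>u v e. u \<in> insert t (nodes g) \<Longrightarrow> v \<in> insert t (nodes g) \<Longrightarrow>
        (u,e,v) \<in> edges (edof t g) \<longleftrightarrow> (f v = Suc (f u) \<and> f u < length w \<and> e = w ! f u)"
    using iso unfolding iso_ed edof_nodes by blast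
  have img: "f ` insert t (nodes g) = {0..length w}" and inj: "inj_on f (insert t (nodes g))"
    using bij by (auto simp: bij_betw_def)
  have src: "a \<in> nodes g" if "(a,e,b) \<in> edges (edof t g)" for a e b
    using that wf_edgeD[OF wf] by (auto simp: edof_edges)
  have succ: "\<exists>v\<in>insert t (nodes g). f v = Suc (f u)" if "u \<in> insert t (nodes g)" "f u < length w" for u
  proof -
    have "Suc (f u) \<in> f ` insert t (nodes g)" using img that by auto
    then show ?thesis by auto
  qed
  have ft: "f t = length w"
  proof (rule ccontr)
    assume "f t \<noteq> length w"
    moreover have "f t \<le> length w" using img by auto
    ultimately have "f t < length w" by simp
    then obtain v where v: "v \<in> insert t (nodes g)" "f v = Suc (f t)" using succ by blast
    then have "(t, w ! f t, v) \<in> edges (edof t g)" using E[of t v] \<open>f t < length w\<close> by simp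
    then show False using src t by blast
  qed
  have fu: "f u < length w" if u: "u \<in> nodes g" for u
  proof -
    have "f u \<noteq> f t" using inj u t by (metis inj_onD insertCI)
    moreover have "f u \<le> length w" using img u by auto
    ultimately show ?thesis using ft by simp
  qed
  have bij2: "bij_betw f (nodes g) {0..<length w}"
  proof (rule bij_betw_subset[OF bij])
    show "nodes g \<subseteq> insert t (nodes g)" by auto
    have "f t \<notin> f ` nodes g" using inj t by (meson inj_on_image_mem_iff insertI1 subset_insertI)
    then have "f ` nodes g = f ` insert t (nodes g) - {f t}" by simp
    then have "f ` nodes g = {0..length w} - {length w}" by (simp only: img ft)
    moreover have "{0..length w} - {length w} = {0..<length w}" by auto
    ultimately show "f ` nodes g = {0..<length w}" by simp
  qed
  have lab: "w ! f u = lab g u" if u: "u \<in> nodes g" for u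
  proof -
    obtain v where v: "v \<in> insert t (nodes g)" "f v = Suc (f u)" using succ fu u by blast
    then have "(u, w ! f u, v) \<in> edges (edof t g)" using E[of u v] fu[OF u] u by simp
    then show ?thesis by (auto simp: edof_edges)
  qed
  have edg: "(u,e,v) \<in> edges g \<longleftrightarrow> (f v = Suc (f u) \<and> Suc (f u) < length w)"
    if u: "u \<in> nodes g" and v: "v \<in> nodes g" for u v e
  proof
    assume "(u,e,v) \<in> edges g"
    then have "(u, lab g u, v) \<in> edges (edof t g)" by (auto simp: edof_edges)
    then have "f v = Suc (f u)" using E[of u v] u v by simp
    then show "f v = Suc (f u) \<and> Suc (f u) < length w" using fu[OF v] by simp
  next
    assume H: "f v = Suc (f u) \<and> Suc (f u) < length w"
    then have "(u, w ! f u, v) \<in> edges (edof t g)" using E[of u v] u v by simp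
    moreover have "v \<noteq> t" using v t by auto
    ultimately show "(u,e,v) \<in> edges g" by (auto simp: edof_edges)
  qed
  show ?thesis unfolding iso_nd using bij2 lab edg by blast
qed



lemma nd_iso_edof:
  assumes wf: "wf_graph g" and t: "t \<notin> nodes g" and iso: "graph_iso g (nd w)"
  shows "graph_iso (edof t g) (ed w)"
proof -
  obtain f where bij: "bij_betw f (nodes g) {0..<length w}"
    and L: "\<And>v. v \<in> nodes g \<Longrightarrow> w ! f v = lab g v"
    and E: "\<And>u v e. u \<in> nodes g \<Longrightarrow> v \<in> nodes g \<Longrightarrow> (u,e,v) \<in> edges g \<longleftrightarrow> (f v = Suc (f u) \<and> Suc (f u) < length w)"
    using iso unfolding iso_nd by blast
  have img: "f ` nodes g = {0..<length w}" using bij by (simp add: bij_betw_def)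
  define f' where "f' = f(t := length w)"
  have bij': "bij_betw f' (insert t (nodes g)) {0..length w}"
  proof -
    have "bij_betw f' (nodes g) {0..<length w}"
      using bij t unfolding f'_def by (metis bij_betw_cong fun_upd_other)
    then have "bij_betw f' (nodes g \<union> {t}) ({0..<length w} \<union> {f' t})"
      using t by (intro notIn_Un_bij_betw) (auto simp: f'_def)
    moreover have "{0..<length w} \<union> {f' t} = {0..length w}" by (auto simp: f'_def)
    ultimately show ?thesis by simp
  qed
  have ho: "hasout g u \<longleftrightarrow> Suc (f u) < length w" if u: "u \<in> nodes g" for u
  proof
    assume "hasout g u"
    then obtain e v where ev: "(u,e,v) \<in> edges g" by (auto simp: hasout_def)
    then show "Suc (f u) < length w" using E[OF u] wf_edgeD[OF wf ev] by blast
  next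
    assume lt: "Suc (f u) < length w"
    then obtain v where v: "v \<in> nodes g" "f v = Suc (f u)" using img
      by (metis atLeastLessThan_iff imageE zero_le)
    then have "(u,(),v) \<in> edges g" using E[OF u v(1)] lt by simp
    then show "hasout g u" by (auto simp: hasout_def)
  qed
  have EE: "(a,e,b) \<in> edges (edof t g) \<longleftrightarrow> (f' b = Suc (f' a) \<and> f' a < length w \<and> e = w ! f' a)"
    if a: "a \<in> insert t (nodes g)" and b: "b \<in> insert t (nodes g)" for a b e
  proof (cases "a = t")
    case True
    have "(a,e,b) \<notin> edges (edof t g)" using True t wf_edgeD[OF wf] by (auto simp: edof_edges)
    then show ?thesis using True by (simp add: f'_def)
  next
    case False
    then have a': "a \<in> nodes g" using a by simp
    have fa: "f' a = f a" "f a < length w" using False img a' by (auto simp: f'_def)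
    show ?thesis
    proof (cases "b = t")
      case True
      have "(a,e,b) \<in> edges (edof t g) \<longleftrightarrow> \<not> hasout g a \<and> e = lab g a"
        using True t wf_edgeD[OF wf] a' by (auto simp: edof_edges)
      then show ?thesis using True ho[OF a'] fa L[OF a'] by (auto simp: f'_def)
    next
      case False
      then have b': "b \<in> nodes g" using b by simp
      have fb: "f' b = f b" "f b < length w" using False img b' by (auto simp: f'_def)
      have "(a,e,b) \<in> edges (edof t g) \<longleftrightarrow> (a,(),b) \<in> edges g \<and> e = lab g a"
        using False by (auto simp: edof_edges)
      then show ?thesis using E[OF a' b'] fa fb L[OF a'] by auto
    qed
  qed
  show ?thesis unfolding iso_ed edof_nodes using bij' EE by blast
qed


definition NF :: "(unit, 'a::finite, unit, 'b::finite) mso_trans \<Rightarrow> nat \<Rightarrow> 'b \<Rightarrow> (unit, 'a) mso" where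
  "NF T c s = Conj (nform T c ()) (Ex1 1 (Bor (map (\<lambda>c2. Conj (eform T c c2 s) (Ex1 0 (Conj (Eq 0 1) (nform T c2 ())))) (clist T))))"

lemma fv_NF: "wf_trans T \<Longrightarrow> fv1 (NF T c s) \<subseteq> {0} \<and> fv2 (NF T c s) = {}"
proof -
  assume wf: "wf_trans T"
  have "fv1 (Conj (eform T c c2 s) (Ex1 0 (Conj (Eq 0 1) (nform T c2 ())))) \<subseteq> {0,1}" for c2
    using wf_eform[OF wf, of c c2 s] wf_nform[OF wf, of c2 "()"] by auto
  moreover have "fv2 (Conj (eform T c c2 s) (Ex1 0 (Conj (Eq 0 1) (nform T c2 ())))) = {}" for c2
    using wf_eform[OF wf, of c c2 s] wf_nform[OF wf, of c2 "()"] by auto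
  ultimately show ?thesis unfolding NF_def using wf_nform[OF wf, of c "()"] by auto
qed

lemma sat_NF:
  assumes wfT: "wf_trans T" and c: "c \<in> copies T" and y: "y \<in> nodes h"
  shows "sat1 h (NF T c s) y \<longleftrightarrow> (y,c) \<in> out_nodes T h \<and> (\<exists>b\<in>out_nodes T h. ((y,c),s,b) \<in> edges (apply_trans T h))"
proof -
  let ?I = "\<lambda>_::nat. y"
  have a: "sat h (?I(1:=v)) (\<lambda>_. {}) (eform T c c2 s) = sat2 h (eform T c c2 s) y v" for v c2
    using sat_fv01[of "eform T c c2 s" h "?I(1:=v)"] wf_eform[OF wfT, of c c2 s] by simp
  have b: "sat h (?I(1:=v, 0:=v')) (\<lambda>_. {}) (nform T c2 ()) = sat1 h (nform T c2 ()) v'" for v v' c2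
    using sat_fv0[of "nform T c2 ()" h "?I(1:=v, 0:=v')"] wf_nform[OF wfT, of c2 "()"] by simp
  have "sat1 h (NF T c s) y \<longleftrightarrow> sat1 h (nform T c ()) y \<and> (\<exists>v\<in>nodes h. \<exists>c2\<in>copies T. sat2 h (eform T c c2 s) y v \<and> sat1 h (nform T c2 ()) v)"
    unfolding NF_def using a b set_clist[OF wfT] by (auto simp: sat1_def)
  also have "\<dots> \<longleftrightarrow> (y,c) \<in> out_nodes T h \<and> (\<exists>b\<in>out_nodes T h. ((y,c),s,b) \<in> edges (apply_trans T h))"
  proof -
    have o: "(y,c) \<in> out_nodes T h \<longleftrightarrow> sat1 h (nform T c ()) y" using c y by (simp add: out_nodes_iff)
    have "(\<exists>v\<in>nodes h. \<exists>c2\<in>copies T. sat2 h (eform T c c2 s) y v \<and> sat1 h (nform T c2 ()) v)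
        \<longleftrightarrow> (\<exists>b\<in>out_nodes T h. ((y,c),s,b) \<in> edges (apply_trans T h))" if yc: "(y,c) \<in> out_nodes T h"
    proof
      assume "\<exists>v\<in>nodes h. \<exists>c2\<in>copies T. sat2 h (eform T c c2 s) y v \<and> sat1 h (nform T c2 ()) v"
      then obtain v c2 where "v \<in> nodes h" "c2 \<in> copies T" "sat2 h (eform T c c2 s) y v" "sat1 h (nform T c2 ()) v" by blast
      moreover from this have "(v,c2) \<in> out_nodes T h" by (simp add: out_nodes_iff)
      ultimately show "\<exists>b\<in>out_nodes T h. ((y,c),s,b) \<in> edges (apply_trans T h)"
        using yc by (intro bexI[of _ "(v,c2)"]) (simp_all add: at_edges)
    next
      assume "\<exists>b\<in>out_nodes T h. ((y,c),s,b) \<in> edges (apply_trans T h)"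
      then obtain v c2 where "(v,c2) \<in> out_nodes T h" "((y,c),s,(v,c2)) \<in> edges (apply_trans T h)" by auto
      then show "\<exists>v\<in>nodes h. \<exists>c2\<in>copies T. sat2 h (eform T c c2 s) y v \<and> sat1 h (nform T c2 ()) v"
        by (auto simp: out_nodes_iff at_edges)
    qed
    then show ?thesis using o by blast
  qed
  finally show ?thesis .
qed

abbreviation "kF \<equiv> (\<lambda>_::nat. False)"

definition transB :: "(unit, 'a::finite, unit, 'b::finite) mso_trans \<Rightarrow> ('a, unit, 'b, unit) mso_trans" where
  "transB T = \<lparr> tdom = vtr kF kF (tdom T),
     copies = (\<lambda>c. 2*c) ` copies T \<union> (\<lambda>c. 2*c+1) ` copies T,
     nform = (\<lambda>a s. if a div 2 \<in> copies T then
                      (if even a then vtr kF kF (NF T (a div 2) s)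
                       else Conj (Neg (HO 0)) (vtr (kF(0:=True)) kF (NF T (a div 2) s)))
                    else FF),
     eform = (\<lambda>a1 a2 _. if a1 div 2 \<in> copies T \<and> a2 div 2 \<in> copies T then
                 vtr (kF(0 := odd a1, 1 := odd a2)) kF (Bor (map (\<lambda>s. eform T (a1 div 2) (a2 div 2) s) univ_list))
               else FF) \<rparr>"

lemma copies_transB: "a \<in> copies (transB T) \<longleftrightarrow> a div 2 \<in> copies T"
proof
  assume "a div 2 \<in> copies T"
  then show "a \<in> copies (transB T)"
    by (cases "even a") (auto simp: transB_def image_iff intro: bexI[of _ "a div 2"] elim!: evenE oddE)
qed (auto simp: transB_def)

lemma wf_transB: "wf_trans T \<Longrightarrow> wf_trans (transB T)"
proof -
  assume wf: "wf_trans T"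
  have cl: "closed (tdom T)" and fin: "finite (copies T)" using wf by (auto simp: wf_trans_def)
  have "closed (tdom (transB T))"
    using cl fv_vtr[of kF kF "tdom T"] by (auto simp: transB_def closed_def)
  moreover have "finite (copies (transB T))" using fin by (simp add: transB_def)
  moreover have "fv1 (nform (transB T) c s) \<subseteq> {0} \<and> fv2 (nform (transB T) c s) = {}" for c s
    using fv_vtr[of kF kF "NF T (c div 2) s"] fv_vtr[of "kF(0:=True)" kF "NF T (c div 2) s"] fv_NF[OF wf, of "c div 2" s]
    by (auto simp: transB_def)
  moreover have "fv1 (eform (transB T) c1 c2 e) \<subseteq> {0,1} \<and> fv2 (eform (transB T) c1 c2 e) = {}" for c1 c2 e
  proof -
    have "fv1 (Bor (map (\<lambda>s. eform T (c1 div 2) (c2 div 2) s) univ_list)) \<subseteq> {0,1}"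
      "fv2 (Bor (map (\<lambda>s. eform T (c1 div 2) (c2 div 2) s) univ_list)) = {}"
      using wf_eform[OF wf] by auto
    moreover have "fv1 (vtr (kF(0 := odd c1, 1 := odd c2)) kF (Bor (map (\<lambda>s. eform T (c1 div 2) (c2 div 2) s) univ_list)))
        \<subseteq> fv1 (Bor (map (\<lambda>s. eform T (c1 div 2) (c2 div 2) s) univ_list))"
      "fv2 (vtr (kF(0 := odd c1, 1 := odd c2)) kF (Bor (map (\<lambda>s. eform T (c1 div 2) (c2 div 2) s) univ_list)))
        \<subseteq> fv2 (Bor (map (\<lambda>s. eform T (c1 div 2) (c2 div 2) s) univ_list))"
      using fv_vtr[of "kF(0 := odd c1, 1 := odd c2)" kF "Bor (map (\<lambda>s. eform T (c1 div 2) (c2 div 2) s) univ_list)"]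
      by blast+
    moreover have "eform (transB T) c1 c2 e = (if c1 div 2 \<in> copies T \<and> c2 div 2 \<in> copies T then
                 vtr (kF(0 := odd c1, 1 := odd c2)) kF (Bor (map (\<lambda>s. eform T (c1 div 2) (c2 div 2) s) univ_list))
               else FF)" by (simp add: transB_def)
    ultimately show ?thesis by (simp only:) (auto simp del: fv_Bor)
  qed
  ultimately show ?thesis unfolding wf_trans_def by blast
qed

context
  fixes T :: "(unit, 'a::finite, unit, 'b::finite) mso_trans" and g :: "(nat, 'a, unit) graph" and t :: nat
  assumes wfT: "wf_trans T" and wf: "wf_graph g" and t: "t \<notin> nodes g"
begin

lemma B_nform_even:
  assumes u: "u \<in> nodes g" and c: "c \<in> copies T"
  shows "sat1 g (nform (transB T) (2*c) s) u \<longleftrightarrow> sat1 (edof t g) (NF T c s) u"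
proof -
  have "sat1 g (nform (transB T) (2*c) s) u = sat g (\<lambda>_. u) (\<lambda>_. {}) (vtr kF kF (NF T c s))"
    using c by (simp add: transB_def sat1_def)
  also have "\<dots> = sat (edof t g) (\<lambda>x. if kF x then t else u) (\<lambda>X. if kF X then insert t {} else {}) (NF T c s)"
    by (rule vtr_sat[OF wf t]) (use u in auto)
  finally show ?thesis by (simp add: sat1_def)
qed

lemma B_nform_odd:
  assumes u: "u \<in> nodes g" and c: "c \<in> copies T"
  shows "sat1 g (nform (transB T) (2*c+1) s) u \<longleftrightarrow> \<not> hasout g u \<and> sat1 (edof t g) (NF T c s) t"
proof -
  have "sat1 g (nform (transB T) (2*c+1) s) u = (\<not> hasout g u \<and> sat g (\<lambda>_. u) (\<lambda>_. {}) (vtr (kF(0:=True)) kF (NF T c s)))"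
    using c by (simp add: transB_def sat1_def sat_HO[OF wf])
  also have "sat g (\<lambda>_. u) (\<lambda>_. {}) (vtr (kF(0:=True)) kF (NF T c s))
     = sat (edof t g) (\<lambda>x. if (kF(0:=True)) x then t else u) (\<lambda>X. if kF X then insert t {} else {}) (NF T c s)"
    by (rule vtr_sat[OF wf t]) (use u in auto)
  also have "\<dots> = sat1 (edof t g) (NF T c s) t"
    using sat_fv0[of "NF T c s" "edof t g"] fv_NF[OF wfT, of c s] by simp
  finally show ?thesis .
qed

lemma B_eform:
  assumes u: "u \<in> nodes g" and v: "v \<in> nodes g" and c1: "a1 div 2 \<in> copies T" and c2: "a2 div 2 \<in> copies T"
  shows "sat2 g (eform (transB T) a1 a2 e) u v \<longleftrightarrow>
    (\<exists>s. sat2 (edof t g) (eform T (a1 div 2) (a2 div 2) s) (if odd a1 then t else u) (if odd a2 then t else v))"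
proof -
  let ?I = "\<lambda>i::nat. if i = 0 then u else v"
  let ?P = "Bor (map (\<lambda>s. eform T (a1 div 2) (a2 div 2) s) univ_list)"
  have fvP: "fv1 ?P \<subseteq> {0,1}" "fv2 ?P = {}" using wf_eform[OF wfT] by auto
  have "sat2 g (eform (transB T) a1 a2 e) u v = sat g ?I (\<lambda>_. {}) (vtr (kF(0 := odd a1, 1 := odd a2)) kF ?P)"
    using c1 c2 by (simp add: transB_def sat2_def)
  also have "\<dots> = sat (edof t g) (\<lambda>x. if (kF(0 := odd a1, 1 := odd a2)) x then t else ?I x) (\<lambda>X. if kF X then insert t {} else {}) ?P"
    by (rule vtr_sat[OF wf t]) (use u v fvP in auto)
  also have "\<dots> = sat2 (edof t g) ?P (if odd a1 then t else u) (if odd a2 then t else v)"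
    using sat_fv01[of ?P "edof t g"] fvP by simp
  also have "\<dots> = (\<exists>s. sat2 (edof t g) (eform T (a1 div 2) (a2 div 2) s) (if odd a1 then t else u) (if odd a2 then t else v))"
    by (simp add: sat2_def)
  finally show ?thesis .
qed

end


lemma nd_last:
  assumes wf: "wf_graph g" and iso: "graph_iso g (nd w)"
  shows "(\<forall>u\<in>nodes g. \<forall>v\<in>nodes g. \<not> hasout g u \<longrightarrow> \<not> hasout g v \<longrightarrow> u = v)
       \<and> (w \<noteq> [] \<longrightarrow> (\<exists>u\<in>nodes g. \<not> hasout g u))"
proof -
  obtain f where bij: "bij_betw f (nodes g) {0..<length w}"
    and E: "\<And>u v e. u \<in> nodes g \<Longrightarrow> v \<in> nodes g \<Longrightarrow> (u,e,v) \<in> edges g \<longleftrightarrow> (f v = Suc (f u) \<and> Suc (f u) < length w)"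
    using iso unfolding iso_nd by blast
  have img: "f ` nodes g = {0..<length w}" and inj: "inj_on f (nodes g)" using bij by (auto simp: bij_betw_def)
  have ho: "hasout g u \<longleftrightarrow> Suc (f u) < length w" if u: "u \<in> nodes g" for u
  proof
    assume "hasout g u"
    then obtain e v where ev: "(u,e,v) \<in> edges g" by (auto simp: hasout_def)
    then show "Suc (f u) < length w" using E[OF u] wf_edgeD[OF wf ev] by blast
  next
    assume lt: "Suc (f u) < length w"
    then obtain v where v: "v \<in> nodes g" "f v = Suc (f u)" using img
      by (metis atLeastLessThan_iff imageE zero_le)
    then have "(u,(),v) \<in> edges g" using E[OF u v(1)] lt by simp
    then show "hasout g u" by (auto simp: hasout_def)
  qed
  have "u = v" if "u \<in> nodes g" "v \<in> nodes g" "\<not> hasout g u" "\<not> hasout g v" for u v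
  proof -
    have "f u < length w" "f v < length w" using img that by auto
    then have "f u = f v" using ho that by auto
    then show ?thesis using inj that by (metis inj_onD)
  qed
  moreover have "\<exists>u\<in>nodes g. \<not> hasout g u" if "w \<noteq> []"
  proof -
    have "length w - 1 \<in> f ` nodes g" using img that by auto
    then obtain u where "u \<in> nodes g" "f u = length w - 1" by auto
    then show ?thesis using ho by (intro bexI[of _ u]) auto
  qed
  ultimately show ?thesis by blast
qed

lemma nd_empty: "graph_iso g (nd w) \<Longrightarrow> nodes g = {} \<Longrightarrow> w = []"
  unfolding iso_nd by (auto simp: bij_betw_def)

lemma B_out_iso:
  fixes T :: "(unit, 'a::finite, unit, 'b::finite) mso_trans" and g :: "(nat, 'a, unit) graph"
  assumes wfT: "wf_trans T" and wf: "wf_graph g" and t: "t \<notin> nodes g"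
    and isog: "graph_iso g (nd w)" and iso: "graph_iso (apply_trans T (edof t g)) (ed z)"
    and nz: "w = [] \<Longrightarrow> z = []"
  shows "graph_iso (apply_trans (transB T) g) (nd z)"
proof -
  define h where "h = edof t g"
  define OT where "OT = out_nodes T h"
  define A where "A = apply_trans T h"
  obtain \<phi> where bij: "bij_betw \<phi> OT {0..length z}"
    and E: "\<And>a b e. a \<in> OT \<Longrightarrow> b \<in> OT \<Longrightarrow> (a,e,b) \<in> edges A \<longleftrightarrow> (\<phi> b = Suc (\<phi> a) \<and> \<phi> a < length z \<and> e = z ! \<phi> a)"
    using iso unfolding iso_ed h_def OT_def A_def at_nodes by blast
  have img: "\<phi> ` OT = {0..length z}" and inj: "inj_on \<phi> OT" using bij by (auto simp: bij_betw_def)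
  have OL: "(\<exists>b'\<in>OT. (b,s,b') \<in> edges A) \<longleftrightarrow> \<phi> b < length z \<and> s = z ! \<phi> b" if b: "b \<in> OT" for b s
  proof
    assume "\<exists>b'\<in>OT. (b,s,b') \<in> edges A"
    then show "\<phi> b < length z \<and> s = z ! \<phi> b" using E b by blast
  next
    assume H: "\<phi> b < length z \<and> s = z ! \<phi> b"
    then have "Suc (\<phi> b) \<in> \<phi> ` OT" using img by auto
    then obtain b' where "b' \<in> OT" "\<phi> b' = Suc (\<phi> b)" by auto
    then show "\<exists>b'\<in>OT. (b,s,b') \<in> edges A" using E[OF b] H by blast
  qed
  have NFs: "sat1 h (NF T c s) y \<longleftrightarrow> (y,c) \<in> OT \<and> \<phi> (y,c) < length z \<and> s = z ! \<phi> (y,c)"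
    if c: "c \<in> copies T" and y: "y \<in> nodes h" for c y s
    using sat_NF[OF wfT c y, of s] OL[of "(y,c)" s] unfolding OT_def A_def by blast
  define \<rho> where "\<rho> = (\<lambda>(u::nat, a::nat). (if odd a then t else u, a div 2))"
  have \<rho>[simp]: "\<rho> (u,a) = (if odd a then t else u, a div 2)" for u a by (simp add: \<rho>_def)
  have nsem: "sat1 g (nform (transB T) a s) u \<longleftrightarrow> (odd a \<longrightarrow> \<not> hasout g u) \<and> \<rho> (u,a) \<in> OT \<and> \<phi> (\<rho> (u,a)) < length z \<and> s = z ! \<phi> (\<rho> (u,a))"
    if u: "u \<in> nodes g" and c: "a div 2 \<in> copies T" for u a s
  proof (cases "even a")
    case True
    then have a: "a = 2 * (a div 2)" by simp
    have "sat1 g (nform (transB T) a s) u \<longleftrightarrow> sat1 h (NF T (a div 2) s) u"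
      using B_nform_even[OF wfT wf t u c, of s] a h_def by simp
    also have "\<dots> \<longleftrightarrow> (u, a div 2) \<in> OT \<and> \<phi> (u, a div 2) < length z \<and> s = z ! \<phi> (u, a div 2)"
      using NFs[OF c, of u s] u h_def by simp
    finally show ?thesis using True by simp
  next
    case False
    then have a: "a = 2 * (a div 2) + 1" by simp
    have "sat1 g (nform (transB T) a s) u \<longleftrightarrow> \<not> hasout g u \<and> sat1 h (NF T (a div 2) s) t"
      using B_nform_odd[OF wfT wf t u c, of s] a h_def by simp
    also have "\<dots> \<longleftrightarrow> \<not> hasout g u \<and> ((t, a div 2) \<in> OT \<and> \<phi> (t, a div 2) < length z \<and> s = z ! \<phi> (t, a div 2))"
      using NFs[OF c, of t s] h_def by simp
    finally show ?thesis using False by simp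
  qed
  have outs: "(u,a) \<in> out_nodes (transB T) g \<longleftrightarrow> u \<in> nodes g \<and> a div 2 \<in> copies T \<and> (odd a \<longrightarrow> \<not> hasout g u) \<and> \<rho> (u,a) \<in> OT \<and> \<phi> (\<rho> (u,a)) < length z"
    for u a
  proof -
    have "(\<exists>!s. P \<and> s = k) \<longleftrightarrow> P" for P and k :: 'b by auto
    then show ?thesis using nsem[of u a] by (auto simp: out_nodes_iff copies_transB)
  qed
  define \<psi> where "\<psi> = (\<lambda>x. \<phi> (\<rho> x))"
  have labs: "lab (apply_trans (transB T) g) (u,a) = z ! \<psi> (u,a)" if ua: "(u,a) \<in> out_nodes (transB T) g" for u a
  proof -
    have "sat1 g (nform (transB T) a (z ! \<psi> (u,a))) u" using ua outs[of u a] nsem[of u a] by (simp add: \<psi>_def)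
    then show ?thesis using at_lab[OF ua] by simp
  qed
  have edg: "((u,a1),(),(v,a2)) \<in> edges (apply_trans (transB T) g) \<longleftrightarrow> \<psi> (v,a2) = Suc (\<psi> (u,a1))"
    if a: "(u,a1) \<in> out_nodes (transB T) g" and b: "(v,a2) \<in> out_nodes (transB T) g" for u a1 v a2
  proof -
    have u: "u \<in> nodes g" "a1 div 2 \<in> copies T" "\<rho> (u,a1) \<in> OT" "\<phi> (\<rho> (u,a1)) < length z" using a outs by blast+
    have v: "v \<in> nodes g" "a2 div 2 \<in> copies T" "\<rho> (v,a2) \<in> OT" using b outs by blast+
    have "((u,a1),(),(v,a2)) \<in> edges (apply_trans (transB T) g) \<longleftrightarrow> sat2 g (eform (transB T) a1 a2 ()) u v"
      using a b by (simp add: at_edges)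
    also have "\<dots> \<longleftrightarrow> (\<exists>s. sat2 h (eform T (a1 div 2) (a2 div 2) s) (if odd a1 then t else u) (if odd a2 then t else v))"
      using B_eform[OF wfT wf t u(1) v(1) u(2) v(2)] h_def by simp
    also have "\<dots> \<longleftrightarrow> (\<exists>s. (\<rho> (u,a1), s, \<rho> (v,a2)) \<in> edges A)"
      using u(3) v(3) unfolding A_def OT_def by (simp add: at_edges)
    also have "\<dots> \<longleftrightarrow> \<psi> (v,a2) = Suc (\<psi> (u,a1))"
      using E[OF u(3) v(3)] u(4) unfolding \<psi>_def by auto
    finally show ?thesis .
  qed
  have last: "\<forall>u\<in>nodes g. \<forall>v\<in>nodes g. \<not> hasout g u \<longrightarrow> \<not> hasout g v \<longrightarrow> u = v"
    and lastex: "w \<noteq> [] \<Longrightarrow> \<exists>u\<in>nodes g. \<not> hasout g u" using nd_last[OF wf isog] by blast+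
  have bij': "bij_betw \<psi> (out_nodes (transB T) g) {0..<length z}"
    unfolding bij_betw_def
  proof
    show "inj_on \<psi> (out_nodes (transB T) g)"
    proof (rule inj_onI)
      fix x y assume x: "x \<in> out_nodes (transB T) g" and y: "y \<in> out_nodes (transB T) g" and eq: "\<psi> x = \<psi> y"
      obtain u a1 where xa: "x = (u,a1)" by (cases x)
      obtain v a2 where ya: "y = (v,a2)" by (cases y)
      have u: "u \<in> nodes g" "odd a1 \<longrightarrow> \<not> hasout g u" "\<rho> (u,a1) \<in> OT" using x xa outs by blast+
      have v: "v \<in> nodes g" "odd a2 \<longrightarrow> \<not> hasout g v" "\<rho> (v,a2) \<in> OT" using y ya outs by blast+
      have r: "\<rho> (u,a1) = \<rho> (v,a2)" using eq inj u(3) v(3) unfolding xa ya \<psi>_def by (metis inj_onD)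
      then have d: "a1 div 2 = a2 div 2" by simp
      show "x = y"
      proof (cases "odd a1")
        case True
        then have "odd a2" using r v(1) t by (auto split: if_splits)
        then have "a1 = a2" using True d by (metis odd_two_times_div_two_succ)
        moreover have "u = v" using last u v True \<open>odd a2\<close> by blast
        ultimately show ?thesis using xa ya by simp
      next
        case False
        then have "even a2" using r u(1) t by (auto split: if_splits)
        then have "a1 = a2" using False d by (metis dvd_mult_div_cancel)
        moreover have "u = v" using r False \<open>even a2\<close> by simp
        ultimately show ?thesis using xa ya by simp
      qed
    qed
    show "\<psi> ` out_nodes (transB T) g = {0..<length z}"
    proof
      show "\<psi> ` out_nodes (transB T) g \<subseteq> {0..<length z}"
      proof
        fix i assume "i \<in> \<psi> ` out_nodes (transB T) g"
        then obtain u a where "(u,a) \<in> out_nodes (transB T) g" "i = \<psi> (u,a)" by auto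
        then show "i \<in> {0..<length z}" using outs[of u a] by (simp add: \<psi>_def)
      qed
    next
      show "{0..<length z} \<subseteq> \<psi> ` out_nodes (transB T) g"
      proof
        fix i assume i: "i \<in> {0..<length z}"
        then have "i \<in> \<phi> ` OT" using img by auto
        then obtain y c where yc: "(y,c) \<in> OT" "\<phi> (y,c) = i" by auto
        have yh: "y \<in> insert t (nodes g)" "c \<in> copies T" using yc(1) unfolding OT_def h_def
          by (auto simp: out_nodes_iff)
        show "i \<in> \<psi> ` out_nodes (transB T) g"
        proof (cases "y = t")
          case False
          then have y: "y \<in> nodes g" using yh by simp
          have "\<rho> (y, 2*c) = (y,c)" by simp
          then have "(y, 2*c) \<in> out_nodes (transB T) g" using outs[of y "2*c"] y yh yc i by simp
          moreover have "\<psi> (y, 2*c) = i" using yc by (simp add: \<psi>_def)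
          ultimately show ?thesis by (metis imageI)
        next
          case True
          have "z \<noteq> []" using i by auto
          then have "w \<noteq> []" using nz by blast
          then obtain u where u: "u \<in> nodes g" "\<not> hasout g u" using lastex by blast
          have "\<rho> (u, 2*c+1) = (t,c)" by simp
          then have "(u, 2*c+1) \<in> out_nodes (transB T) g" using outs[of u "2*c+1"] u yh yc i True by simp
          moreover have "\<psi> (u, 2*c+1) = i" using yc True by (simp add: \<psi>_def)
          ultimately show ?thesis by (metis imageI)
        qed
      qed
    qed
  qed
  have L: "\<forall>x\<in>nodes (apply_trans (transB T) g). z ! \<psi> x = lab (apply_trans (transB T) g) x"
    using labs by auto
  have EE: "\<forall>x\<in>nodes (apply_trans (transB T) g). \<forall>y\<in>nodes (apply_trans (transB T) g). \<forall>e.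
      (x,e,y) \<in> edges (apply_trans (transB T) g) \<longleftrightarrow> (\<psi> y = Suc (\<psi> x) \<and> Suc (\<psi> x) < length z)"
  proof (intro ballI allI)
    fix x y and e :: unit
    assume x: "x \<in> nodes (apply_trans (transB T) g)" and y: "y \<in> nodes (apply_trans (transB T) g)"
    obtain u a1 where xa: "x = (u,a1)" by (cases x)
    obtain v a2 where ya: "y = (v,a2)" by (cases y)
    have "\<psi> y < length z" using bij' y by (auto simp: bij_betw_def)
    then show "(x,e,y) \<in> edges (apply_trans (transB T) g) \<longleftrightarrow> (\<psi> y = Suc (\<psi> x) \<and> Suc (\<psi> x) < length z)"
      using edg[of u a1 v a2] x y xa ya by auto
  qed
  show ?thesis unfolding iso_nd using bij' L EE by auto
qed


lemma dirB:
  fixes m :: "('a::finite list \<times> 'b::finite list) set"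
  assumes ed: "mso_definable (ed_rel m)" and nz: "\<forall>z. ([], z) \<in> m \<longrightarrow> z = []"
  shows "mso_definable (nd_rel m)"
proof -
  obtain T :: "(unit, 'a, unit, 'b) mso_trans" where wfT: "wf_trans T"
    and D: "\<And>g::(nat,unit,'a) graph. wf_graph g \<Longrightarrow> sat0 g (tdom T) \<longleftrightarrow> (\<exists>w z. (w,z) \<in> m \<and> graph_iso g (ed w))"
    and O: "\<And>g::(nat,unit,'a) graph. \<And>w z. wf_graph g \<Longrightarrow> (w,z) \<in> m \<Longrightarrow> graph_iso g (ed w) \<Longrightarrow> graph_iso (apply_trans T g) (ed z)"
    using ed unfolding mso_def_ed by blast
  have clT: "closed (tdom T)" using wfT by (simp add: wf_trans_def)
  show ?thesis
    unfolding mso_def_nd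
  proof (intro exI conjI allI impI)
    show "wf_trans (transB T)" by (rule wf_transB[OF wfT])
    fix g :: "(nat, 'a, unit) graph" assume wf: "wf_graph g"
    define t where "t = cfresh (nodes g)"
    have t: "t \<notin> nodes g" using cfresh wf unfolding t_def wf_graph_def by blast
    have cl: "closed (tdom (transB T))" using wf_transB[OF wfT] by (simp add: wf_trans_def)
    have "sat0 g (tdom (transB T)) \<longleftrightarrow> sat g (\<lambda>_. 0) (\<lambda>_. {}) (vtr kF kF (tdom T))"
      using sat0_closed[OF cl, of g "\<lambda>_. 0"] by (simp add: transB_def)
    also have "\<dots> \<longleftrightarrow> sat (edof t g) (\<lambda>x. if kF x then t else 0) (\<lambda>X. if kF X then insert t {} else {}) (tdom T)"
      by (rule vtr_sat[OF wf t]) (use clT in \<open>auto simp: closed_def\<close>)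
    also have "\<dots> \<longleftrightarrow> sat0 (edof t g) (tdom T)"
      using sat0_closed[OF clT, of "edof t g" "\<lambda>_. 0"] by simp
    also have "\<dots> \<longleftrightarrow> (\<exists>w z. (w,z) \<in> m \<and> graph_iso (edof t g) (ed w))"
      by (rule D[OF wf_edof[OF wf]])
    also have "\<dots> \<longleftrightarrow> (\<exists>w z. (w,z) \<in> m \<and> graph_iso g (nd w))"
      using edof_iso_nd[OF wf t] nd_iso_edof[OF wf t] by blast
    finally show "sat0 g (tdom (transB T)) \<longleftrightarrow> (\<exists>w z. (w,z) \<in> m \<and> graph_iso g (nd w))" .
    fix w z assume wz: "(w,z) \<in> m" and i: "graph_iso g (nd w)"
    have "graph_iso (apply_trans T (edof t g)) (ed z)"
      using O[OF wf_edof[OF wf] wz nd_iso_edof[OF wf t i]] .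
    moreover have "w = [] \<Longrightarrow> z = []" using nz wz by blast
    ultimately show "graph_iso (apply_trans (transB T) g) (nd z)"
      using B_out_iso[OF wfT wf t i] by blast
  qed
qed

theorem lemma3p9:
  fixes m :: "('a::finite list \<times> 'b::finite list) set"
  shows "mso_definable (nd_rel m) \<longleftrightarrow>
           (mso_definable (ed_rel m) \<and> (\<forall>z. ([], z) \<in> m \<longrightarrow> z = []))"
  using dirA dirB by blast


end
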